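(* Assume the Standing setup, suppose $R(z)$ is analytic on $\mathcal V_\epsilon$ for some $\epsilon>0$, and let $Q_s=(-1)^s(A_0^{-1}A_1)^sA_0^{-1}+(I_X-T_{-1}C_0)^{-s-1}T_{-1}$ for $s\ge0$ (the Maclaurin coefficients of the analytic extension of $R-R_{\rm sin}$ to $|z|<1+\epsilon$). Suppose $c>0$ is such that $\|Q_s\|\le c/(1+\epsilon)^s$ for all $s\ge0$. Then for every $\ell\ge0$ the series $\sum_{r\ge0}\binom{\ell+r}{\ell}Q_{\ell+r}$ converges absolutely, $$T_\ell=\sum_{r\ge0}\binom{\ell+r}{\ell}Q_{\ell+r},$$ and $\|T_\ell\|\le c(1+\epsilon)/\epsilon^{\ell+1}$.
   Context: Standing setup. Let $X,Y$ be complex Banach spaces, let $\mathcal B(X,Y)$ denote the bounded linear operators from $X$ to $Y$ ($\mathcal B(X)=\mathcal B(X,X)$), and let $I_X$ be the identity on $X$. Let $A_0,A_1\in\mathcal B(X,Y)$, let $A(z)=A_0+A_1z$ ($z\in\mathbb C$), and set $C_0=A_0+A_1$, $C_1=A_1$, so that $A(z)=C_0+C_1(z-1)$. Let $R(z)=A(z)^{-1}\in\mathcal B(Y,X)$ where this inverse exists. For $\epsilon>0$ let $\mathcal V_\epsilon=\{z\in\mathbb C:|z|<1+\epsilon,\ z\ne1\}$, and for $\theta>0$ let $\mathcal W_\theta=\{z\in\mathbb C:0<|z-1|<1+\theta\}$. If $R$ is analytic on $\mathcal V_\epsilon$ then it has a Laurent expansion $R(z)=\sum_{j\in\mathbb Z}T_j(z-1)^j$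 on $0<|z-1|<\epsilon$ with $T_j\in\mathcal B(Y,X)$, and (known facts) $T_{-k}=(-1)^{k-1}(T_{-1}C_0)^{k-1}T_{-1}$ for $k\ge1$, $T_\ell=(-1)^\ell(T_0C_1)^\ell T_0$ for $\ell\ge0$, $\|(T_{-1}C_0)^k\|^{1/k}\to0$, $T_{-1}C_1+T_0C_0=I_X$, $C_1T_{-1}+C_0T_0=I_Y$, $T_{-1}C_iT_0=0$ and $T_0C_iT_{-1}=0$ for $i=0,1$; moreover $P=T_{-1}C_1$ and $P^c=I_X-P=T_0C_0$ are complementary projections on $X$ and $Q=C_1T_{-1}$, $Q^c=I_Y-Q=C_0T_0$ are complementary projections on $Y$. The singular part $R_{\rm sin}(z)=\sum_{k\ge1}T_{-k}(z-1)^{-k}$ converges for all $z\ne1$ and the regular part is $R_{\rm reg}(z)=\sum_{\ell\ge0}T_\ell(z-1)^\ell$. Define, for integers $s\ge0$, $U_s=-(I_X-T_{-1}C_0)^{-s-1}T_{-1}$ (these are the Maclaurin coefficients of $R_{\rm sin}$) and, whenever $I_X-T_0C_1$ is invertible, $V_s=(-1)^s(I_X-T_0C_1)^{-s-1}(T_0C_1)^sT_0$. *)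

theory Defs
  imports "HOL-Analysis.Analysis"
begin

class complex_banach = banach +
  fixes scaleC :: "complex \<Rightarrow> 'a \<Rightarrow> 'a"
  assumes scaleC_add_left: "scaleC (a + b) x = scaleC a x + scaleC b x"
    and scaleC_add_right: "scaleC a (x + y) = scaleC a x + scaleC a y"
    and scaleC_scaleC: "scaleC a (scaleC b x) = scaleC (a * b) x"
    and scaleC_of_real: "scaleC (complex_of_real r) x = r *\<^sub>R x"
    and norm_scaleC: "norm (scaleC a x) = cmod a * norm x"

text \<open>Membership in B(X,Y): a bounded (real-)linear map that is complex linear.\<close>
definition clinear_op :: "('a::complex_banach \<Rightarrow>\<^sub>L 'b::complex_banach) \<Rightarrow> bool" where
  "clinear_op T \<longleftrightarrow> (\<forall>c x. blinfun_apply T (scaleC c x) = scaleC c (blinfun_apply T x))"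

definition cscaleL :: "complex \<Rightarrow> ('a::real_normed_vector \<Rightarrow>\<^sub>L 'b::complex_banach) \<Rightarrow> ('a \<Rightarrow>\<^sub>L 'b)" where
  "cscaleL c T = Blinfun (\<lambda>x. scaleC c (blinfun_apply T x))"

definition op_inv :: "('a::real_normed_vector \<Rightarrow>\<^sub>L 'b::real_normed_vector) \<Rightarrow> ('b \<Rightarrow>\<^sub>L 'a)" where
  "op_inv A = (SOME B. B o\<^sub>L A = id_blinfun \<and> A o\<^sub>L B = id_blinfun)"

definition opow :: "('a::real_normed_vector \<Rightarrow>\<^sub>L 'a) \<Rightarrow> nat \<Rightarrow> ('a \<Rightarrow>\<^sub>L 'a)" where
  "opow T n = ((\<lambda>S. T o\<^sub>L S) ^^ n) id_blinfun"

definition op_analytic_on ::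
  "complex set \<Rightarrow> (complex \<Rightarrow> ('a::real_normed_vector \<Rightarrow>\<^sub>L 'b::complex_banach)) \<Rightarrow> bool" where
  "op_analytic_on S f \<longleftrightarrow>
     (\<forall>z\<in>S. \<exists>r>0. \<exists>a::nat \<Rightarrow> ('a \<Rightarrow>\<^sub>L 'b).
        \<forall>w\<in>ball z r. (\<lambda>n. cscaleL ((w - z) ^ n) (a n)) sums f w)"

end

theory Submission
  imports Defs
begin



lemma scaleC_bl: "bounded_linear (\<lambda>x::'a::complex_banach. scaleC c x)"
proof
  show "scaleC c (x + y) = scaleC c x + scaleC c y" for x y by (rule scaleC_add_right)
  show "scaleC c (r *\<^sub>R x) = r *\<^sub>R scaleC c x" for r and x :: 'a
    by (metis scaleC_of_real scaleC_scaleC mult.commute)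
  show "\<exists>K. \<forall>x::'a. norm (scaleC c x) \<le> norm x * K"
    by (rule exI[of _ "cmod c"]) (simp add: norm_scaleC mult.commute)
qed

lemma scaleC_zero[simp]: "scaleC c (0::'a::complex_banach) = 0"
  using linear_0[OF bounded_linear.linear[OF scaleC_bl]] .

lemma scaleC_one[simp]: "scaleC 1 (x::'a::complex_banach) = x"
  using scaleC_of_real[of 1 x] by simp

lemma cscaleL_apply[simp]: "blinfun_apply (cscaleL c T) x = scaleC c (blinfun_apply T x)"
  unfolding cscaleL_def
  by (subst bounded_linear_Blinfun_apply) (auto intro: bounded_linear_compose[OF scaleC_bl blinfun.bounded_linear_right])




lemma bc_assoc: "(A o\<^sub>L B) o\<^sub>L C = A o\<^sub>L (B o\<^sub>L C)"
  by (rule blinfun_eqI) simp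
lemma bc_id1[simp]: "id_blinfun o\<^sub>L A = A" by (rule blinfun_eqI) simp
lemma bc_id2[simp]: "A o\<^sub>L id_blinfun = A" by (rule blinfun_eqI) simp
lemma bc_add_left: "(A + B) o\<^sub>L C = (A o\<^sub>L C) + (B o\<^sub>L C)"
  by (rule blinfun_eqI) (simp add: blinfun.add_left)
lemma bc_add_right: "C o\<^sub>L (A + B) = (C o\<^sub>L A) + (C o\<^sub>L B)"
  by (rule blinfun_eqI) (simp add: blinfun.add_left blinfun.add_right)
lemma bc_diff_left: "(A - B) o\<^sub>L C = (A o\<^sub>L C) - (B o\<^sub>L C)"
  by (rule blinfun_eqI) (simp add: blinfun.diff_left)
lemma bc_diff_right: "C o\<^sub>L (A - B) = (C o\<^sub>L A) - (C o\<^sub>L B)"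
  by (rule blinfun_eqI) (simp add: blinfun.diff_left blinfun.diff_right)
lemma bc_minus_left: "(- A) o\<^sub>L C = - (A o\<^sub>L C)"
  by (rule blinfun_eqI) (simp add: blinfun.minus_left)
lemma bc_minus_right: "C o\<^sub>L (- A) = - (C o\<^sub>L A)"
  by (rule blinfun_eqI) (simp add: blinfun.minus_left blinfun.minus_right)
lemma bc_scaleR_left: "(r *\<^sub>R A) o\<^sub>L C = r *\<^sub>R (A o\<^sub>L C)"
  by (rule blinfun_eqI) (simp add: blinfun.scaleR_left)
lemma bc_scaleR_right: "C o\<^sub>L (r *\<^sub>R A) = r *\<^sub>R (C o\<^sub>L A)"
  by (rule blinfun_eqI) (simp add: blinfun.scaleR_left blinfun.scaleR_right)

lemma scaleC_zero_left[simp]: "scaleC 0 (x::'a::complex_banach) = 0"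
  using scaleC_of_real[of 0 x] by simp

lemma scaleC_minus_right: "scaleC c (- x::'a::complex_banach) = - scaleC c x"
  using linear_neg[OF bounded_linear.linear[OF scaleC_bl]] .

lemma scaleC_diff_right: "scaleC c (x - y::'a::complex_banach) = scaleC c x - scaleC c y"
  using linear_diff[OF bounded_linear.linear[OF scaleC_bl]] .

lemma scaleC_scaleR: "scaleC c (r *\<^sub>R x::'a::complex_banach) = r *\<^sub>R scaleC c x"
  by (metis scaleC_of_real scaleC_scaleC mult.commute)

lemma cscaleL_mult: "cscaleL a (cscaleL b T) = cscaleL (a*b) T"
  by (rule blinfun_eqI) (simp add: scaleC_scaleC)

lemma cscaleL_1[simp]: "cscaleL 1 T = T"
  by (rule blinfun_eqI) simp

lemma cscaleL_0[simp]: "cscaleL 0 T = 0"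
  by (rule blinfun_eqI) simp

lemma cscaleL_zero[simp]: "cscaleL c 0 = 0"
  by (rule blinfun_eqI) simp

lemma cscaleL_of_real: "cscaleL (of_real r) T = r *\<^sub>R T"
  by (rule blinfun_eqI) (simp add: scaleC_of_real blinfun.scaleR_left)

lemma cscaleL_add_left: "cscaleL (a+b) T = cscaleL a T + cscaleL b T"
  by (rule blinfun_eqI) (simp add: scaleC_add_left blinfun.add_left)

lemma cscaleL_add: "cscaleL c (S + T) = cscaleL c S + cscaleL c T"
  by (rule blinfun_eqI) (simp add: scaleC_add_right blinfun.add_left)

lemma cscaleL_diff: "cscaleL c (S - T) = cscaleL c S - cscaleL c T"
  by (rule blinfun_eqI) (simp add: scaleC_diff_right blinfun.diff_left)

lemma cscaleL_minus: "cscaleL c (- T) = - cscaleL c T"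
  by (rule blinfun_eqI) (simp add: scaleC_minus_right blinfun.minus_left)

lemma cscaleL_scaleR: "cscaleL c (r *\<^sub>R T) = r *\<^sub>R cscaleL c T"
  by (rule blinfun_eqI) (simp add: scaleC_scaleR blinfun.scaleR_left)

lemma cscaleL_bl: "bounded_linear (cscaleL c :: ('a::real_normed_vector \<Rightarrow>\<^sub>L 'b::complex_banach) \<Rightarrow> _)"
proof
  show "cscaleL c (x + y) = cscaleL c x + cscaleL c y" for x y :: "'a \<Rightarrow>\<^sub>L 'b" by (rule cscaleL_add)
  show "cscaleL c (r *\<^sub>R x) = r *\<^sub>R cscaleL c x" for r and x :: "'a \<Rightarrow>\<^sub>L 'b" by (rule cscaleL_scaleR)
  have "norm (cscaleL c x) \<le> norm x * cmod c" for x :: "'a \<Rightarrow>\<^sub>L 'b"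
    by (rule norm_blinfun_bound) (use mult_left_mono[OF norm_blinfun, of "cmod c"] in \<open>auto simp: norm_scaleC algebra_simps\<close>)
  then show "\<exists>K. \<forall>x::'a \<Rightarrow>\<^sub>L 'b. norm (cscaleL c x) \<le> norm x * K" by blast
qed

lemma norm_cscaleL_le: "norm (cscaleL c T) \<le> cmod c * norm T"
  by (rule norm_blinfun_bound) (auto simp: norm_scaleC mult.assoc mult_left_mono norm_blinfun)

lemma norm_cscaleL: "norm (cscaleL c T) = cmod c * norm T"
proof (cases "c = 0")
  case False
  have "norm T = norm (cscaleL (1/c) (cscaleL c T))" by (simp add: cscaleL_mult False)
  also have "\<dots> \<le> cmod (1/c) * norm (cscaleL c T)" by (rule norm_cscaleL_le)
  finally have "cmod c * norm T \<le> norm (cscaleL c T)"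
    using False by (simp add: norm_divide field_simps)
  then show ?thesis using norm_cscaleL_le[of c T] by linarith
qed simp

lemma cscaleL_compose_left: "cscaleL c S o\<^sub>L T = cscaleL c (S o\<^sub>L T)"
  by (rule blinfun_eqI) simp

lemma clinear_opD: "clinear_op S \<Longrightarrow> blinfun_apply S (scaleC c x) = scaleC c (blinfun_apply S x)"
  unfolding clinear_op_def by blast

lemma cscaleL_compose_right: "clinear_op S \<Longrightarrow> S o\<^sub>L cscaleL c T = cscaleL c (S o\<^sub>L T)"
  by (rule blinfun_eqI) (simp add: clinear_opD)

lemma cscaleL_compose_both: "clinear_op S \<Longrightarrow> cscaleL a S o\<^sub>L cscaleL b T = cscaleL (a*b) (S o\<^sub>L T)"
  by (simp add: cscaleL_compose_left cscaleL_compose_right cscaleL_mult)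

lemma clinear_id[simp]: "clinear_op id_blinfun"
  by (simp add: clinear_op_def)

lemma clinear_compose: "clinear_op S \<Longrightarrow> clinear_op T \<Longrightarrow> clinear_op (S o\<^sub>L T)"
  by (simp add: clinear_op_def)

lemma clinear_add: "clinear_op S \<Longrightarrow> clinear_op T \<Longrightarrow> clinear_op (S + T)"
  by (simp add: clinear_op_def blinfun.add_left scaleC_add_right)

lemma clinear_diff: "clinear_op S \<Longrightarrow> clinear_op T \<Longrightarrow> clinear_op (S - T)"
  by (simp add: clinear_op_def blinfun.diff_left scaleC_diff_right)

lemma clinear_uminus: "clinear_op S \<Longrightarrow> clinear_op (- S)"
  by (simp add: clinear_op_def scaleC_minus_right blinfun.minus_left)

lemma clinear_zero[simp]: "clinear_op 0"
  by (simp add: clinear_op_def)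

lemma clinear_scaleR: "clinear_op S \<Longrightarrow> clinear_op (r *\<^sub>R S)"
  by (simp add: clinear_op_def scaleC_scaleR blinfun.scaleR_left)

lemma clinear_cscaleL: "clinear_op S \<Longrightarrow> clinear_op (cscaleL a S)"
  by (simp add: clinear_op_def scaleC_scaleC mult.commute)

lemma clinear_inverse:
  assumes "clinear_op A" "B o\<^sub>L A = id_blinfun" "A o\<^sub>L B = id_blinfun"
  shows "clinear_op B"
  unfolding clinear_op_def
proof (intro allI)
  fix c x
  have "blinfun_apply B (scaleC c x) = blinfun_apply B (scaleC c (blinfun_apply A (blinfun_apply B x)))"
    using assms(3) by (metis blinfun_apply_blinfun_compose blinfun_apply_id_blinfun)
  also have "\<dots> = blinfun_apply B (blinfun_apply A (scaleC c (blinfun_apply B x)))"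
    using assms(1) by (simp add: clinear_opD)
  also have "\<dots> = scaleC c (blinfun_apply B x)"
    using assms(2) by (metis blinfun_apply_blinfun_compose blinfun_apply_id_blinfun)
  finally show "blinfun_apply B (scaleC c x) = scaleC c (blinfun_apply B x)" .
qed

lemma op_inv_eq:
  fixes A :: "'a::real_normed_vector \<Rightarrow>\<^sub>L 'b::real_normed_vector"
  assumes "B o\<^sub>L A = id_blinfun" "A o\<^sub>L B = id_blinfun"
  shows "op_inv A = B"
proof -
  have ex: "\<exists>B. B o\<^sub>L A = id_blinfun \<and> A o\<^sub>L B = id_blinfun" using assms by blast
  have s: "op_inv A o\<^sub>L A = id_blinfun \<and> A o\<^sub>L op_inv A = id_blinfun"
    unfolding op_inv_def by (rule someI_ex[OF ex])
  have "op_inv A = op_inv A o\<^sub>L (A o\<^sub>L B)" using assms(2) by simp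
  also have "\<dots> = (op_inv A o\<^sub>L A) o\<^sub>L B" by (simp add: bc_assoc)
  also have "\<dots> = B" using s by simp
  finally show ?thesis .
qed

lemma left_inv_unique:
  assumes "B o\<^sub>L A = id_blinfun" "A o\<^sub>L C = id_blinfun"
  shows "B = C"
  by (metis assms bc_assoc bc_id1 bc_id2)

lemma opow_0[simp]: "opow T 0 = id_blinfun" by (simp add: opow_def)
lemma opow_Suc: "opow T (Suc n) = T o\<^sub>L opow T n" by (simp add: opow_def)
lemma opow_Suc': "opow T (Suc n) = opow T n o\<^sub>L T"
proof (induction n)
  case (Suc n)
  have "opow T (Suc (Suc n)) = T o\<^sub>L (opow T n o\<^sub>L T)" using Suc by (simp add: opow_Suc)
  also have "\<dots> = opow T (Suc n) o\<^sub>L T" by (simp add: opow_Suc bc_assoc)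
  finally show ?case .
qed (simp add: opow_Suc)
lemma opow_add: "opow T (m + n) = opow T m o\<^sub>L opow T n"
  by (induction m) (simp_all add: opow_Suc bc_assoc)
lemma norm_opow: "norm (opow T n) \<le> norm T ^ n"
proof (induction n)
  case 0 then show ?case by (simp add: norm_blinfun_id_le)
next
  case (Suc n)
  have "norm (opow T (Suc n)) \<le> norm T * norm (opow T n)" unfolding opow_Suc by (rule norm_blinfun_compose)
  also have "\<dots> \<le> norm T * norm T ^ n" using Suc by (simp add: mult_left_mono)
  finally show ?case by simp
qed
lemma clinear_opow: "clinear_op T \<Longrightarrow> clinear_op (opow T n)"
  by (induction n) (simp_all add: opow_Suc clinear_compose)
lemma opow_uminus: "opow (- T) n = (-1)^n *\<^sub>R opow T n"
  by (induction n) (simp_all add: opow_Suc bc_scaleR_right bc_minus_left)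




lemma summable_bounded_terms:
  fixes f :: "nat \<Rightarrow> 'a::real_normed_vector"
  assumes "summable f" shows "\<exists>K. \<forall>n. norm (f n) \<le> K"
proof -
  have "Bseq f" using summable_LIMSEQ_zero[OF assms] by (intro convergent_imp_Bseq) (auto simp: convergent_def)
  then show ?thesis unfolding Bseq_def by blast
qed

lemma geom_summable:
  assumes "\<And>n. norm (a n) * \<rho>^n \<le> K" "0 \<le> t" "t < \<rho>"
  shows "summable (\<lambda>n. norm (a n) * t^n)"
proof -
  have rho: "\<rho> > 0" using assms by linarith
  have "summable (\<lambda>n. K * (t/\<rho>)^n)"
    using assms rho by (intro summable_mult summable_geometric) auto
  moreover have "norm (norm (a n) * t^n) \<le> K * (t/\<rho>)^n" for n
  proof -
    have "norm (norm (a n) * t^n) = (norm (a n) * \<rho>^n) * (t/\<rho>)^n"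
      using rho assms(2) by (simp add: power_divide field_simps)
    also have "\<dots> \<le> K * (t/\<rho>)^n"
      using assms rho by (intro mult_right_mono) auto
    finally show ?thesis .
  qed
  ultimately show ?thesis by (rule summable_comparison_test'[where N=0])
qed

lemma ps_abs_summable:
  fixes a :: "nat \<Rightarrow> ('a::real_normed_vector \<Rightarrow>\<^sub>L 'b::complex_banach)"
  assumes conv: "\<And>w. 0 < cmod (w - z) \<Longrightarrow> cmod (w - z) < r \<Longrightarrow> summable (\<lambda>n. cscaleL ((w - z)^n) (a n))"
    and t: "0 \<le> t" "t < r"
  shows "summable (\<lambda>n. norm (a n) * t^n)"
proof -
  define t' where "t' = (t + r) / 2"
  have t': "0 < t'" "t < t'" "t' < r" using t by (auto simp: t'_def)
  have "summable (\<lambda>n. cscaleL ((of_real t')^n) (a n))"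
    using conv[of "z + of_real t'"] t' by simp
  then obtain K where K: "\<And>n. norm (cscaleL ((of_real t')^n) (a n)) \<le> K"
    using summable_bounded_terms by blast
  have "norm (a n) * t'^n \<le> K" for n
    using K[of n] t' by (simp add: norm_cscaleL norm_power mult.commute)
  then show ?thesis using geom_summable[of a t' K t] t t' by auto
qed

lemma ps_zero_acc:
  fixes a :: "nat \<Rightarrow> ('a::real_normed_vector \<Rightarrow>\<^sub>L 'b::complex_banach)"
  assumes r: "r > 0"
    and ser: "\<And>w. 0 < cmod (w - z) \<Longrightarrow> cmod (w - z) < r \<Longrightarrow> (\<lambda>n. cscaleL ((w - z)^n) (a n)) sums f w"
    and acc: "\<And>\<delta>. \<delta> > 0 \<Longrightarrow> \<exists>w. 0 < cmod (w - z) \<and> cmod (w - z) < \<delta> \<and> f w = 0"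
  shows "a n = 0"
proof (induction n rule: less_induct)
  case (less n)
  define t where "t = r / 2"
  have t: "0 < t" "t < r" using r by (auto simp: t_def)
  have sa: "summable (\<lambda>m. norm (a m) * t^m)"
    by (rule ps_abs_summable[of z r a]) (use ser t in \<open>auto simp: sums_iff\<close>)
  have "summable (\<lambda>k. norm (a (k + Suc n)) * t^(k + Suc n))"
    using sa by (subst summable_iff_shift)
  then have "summable (\<lambda>k. (norm (a (k + Suc n)) * t^(k + Suc n)) / t^(Suc n))"
    by (rule summable_divide)
  then have sC: "summable (\<lambda>k. norm (a (k + Suc n)) * t^k)"
    using t by (simp add: power_add)
  define C where "C = (\<Sum>k. norm (a (k + Suc n)) * t^k)"
  have bound: "norm (a n) \<le> d * C" if d: "0 < d" "d < t" for d
  proof -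
    obtain w where w: "0 < cmod (w - z)" "cmod (w - z) < d" "f w = 0" using acc d by blast
    define u where "u = w - z"
    have u: "u \<noteq> 0" "cmod u < d" using w by (auto simp: u_def)
    have s0: "(\<lambda>m. cscaleL (u^m) (a m)) sums 0"
      using ser[of w] w d t by (simp add: u_def)
    have "(\<lambda>k. cscaleL (u^(k+n)) (a (k+n))) sums (0 - (\<Sum>i<n. cscaleL (u^i) (a i)))"
      by (rule sums_split_initial_segment[OF s0])
    moreover have "(\<Sum>i<n. cscaleL (u^i) (a i)) = 0" using less by simp
    ultimately have "(\<lambda>k. cscaleL (u^(k+n)) (a (k+n))) sums 0" by simp
    then have "(\<lambda>k. cscaleL (1/u^n) (cscaleL (u^(k+n)) (a (k+n)))) sums cscaleL (1/u^n) 0"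
      by (rule bounded_linear.sums[OF cscaleL_bl])
    then have s1: "(\<lambda>k. cscaleL (u^k) (a (k+n))) sums 0"
      using u by (simp add: cscaleL_mult power_add)
    then have "(\<lambda>k. cscaleL (u^(Suc k)) (a (Suc k + n))) sums (0 - cscaleL (u^0) (a (0 + n)))"
      by (subst sums_Suc_iff) simp
    then have s2: "(\<lambda>k. cscaleL (u^(Suc k)) (a (k + Suc n))) sums (- a n)" by simp
    have nb: "norm (cscaleL (u^(Suc k)) (a (k + Suc n))) \<le> d * (norm (a (k + Suc n)) * t^k)" for k
    proof -
      have "norm (cscaleL (u^(Suc k)) (a (k + Suc n))) = cmod u * cmod u ^ k * norm (a (k + Suc n))"
        by (simp add: norm_cscaleL norm_power norm_mult)
      also have "\<dots> \<le> d * t^k * norm (a (k + Suc n))"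
        using u d by (intro mult_right_mono mult_mono power_mono) auto
      finally show ?thesis by (simp add: algebra_simps)
    qed
    have sn: "summable (\<lambda>k. d * (norm (a (k + Suc n)) * t^k))" using sC by (rule summable_mult)
    have sn': "summable (\<lambda>k. norm (cscaleL (u^(Suc k)) (a (k + Suc n))))"
      by (rule summable_comparison_test'[OF sn, of 0]) (use nb in auto)
    have "norm (a n) = norm (\<Sum>k. cscaleL (u^(Suc k)) (a (k + Suc n)))"
      using s2 by (simp add: sums_iff)
    also have "\<dots> \<le> (\<Sum>k. norm (cscaleL (u^(Suc k)) (a (k + Suc n))))" by (rule summable_norm[OF sn'])
    also have "\<dots> \<le> (\<Sum>k. d * (norm (a (k + Suc n)) * t^k))"
      by (rule suminf_le[OF nb sn' sn])
    also have "\<dots> = d * C" unfolding C_def using sC by (rule suminf_mult)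
    finally show ?thesis .
  qed
  have C0: "C \<ge> 0" unfolding C_def using sC t by (intro suminf_nonneg) auto
  show "a n = 0"
  proof (rule ccontr)
    assume "a n \<noteq> 0"
    then have p: "norm (a n) > 0" by simp
    define d where "d = min (t/2) (norm (a n) / (2 * (C + 1)))"
    have d: "0 < d" "d < t" using t p C0 by (auto simp: d_def)
    have "d * C \<le> (norm (a n) / (2 * (C + 1))) * C"
      using C0 by (intro mult_right_mono) (auto simp: d_def)
    also have "\<dots> < norm (a n)" using p C0 by (auto simp: field_simps intro!: add_nonneg_pos)
    finally show False using bound[OF d] by linarith
  qed
qed

lemma identity_thm:
  fixes h :: "complex \<Rightarrow> ('a::real_normed_vector \<Rightarrow>\<^sub>L 'b::complex_banach)"
  assumes D: "open D" "connected D" and an: "op_analytic_on D h" and z0: "z0 \<in> D"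
    and zero: "\<exists>r>0. \<forall>w\<in>ball z0 r. h w = 0"
  shows "\<forall>z\<in>D. h z = 0"
proof -
  define S where "S = {z\<in>D. \<exists>r>0. \<forall>w\<in>ball z r. h w = 0}"
  have SD: "S \<subseteq> D" by (auto simp: S_def)
  have openS: "open S"
    unfolding open_contains_ball
  proof
    fix z assume "z \<in> S"
    then obtain r where r: "r > 0" "\<forall>w\<in>ball z r. h w = 0" "z \<in> D" by (auto simp: S_def)
    obtain r' where r': "r' > 0" "ball z r' \<subseteq> D" using D(1) \<open>z \<in> D\<close> open_contains_ball by blast
    have "ball z (min r r') \<subseteq> S"
    proof
      fix y assume y: "y \<in> ball z (min r r')"
      have "\<forall>w\<in>ball y (min r r' - dist z y). h w = 0"
      proof
        fix w assume "w \<in> ball y (min r r' - dist z y)"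
        then have "dist z w < r" using dist_triangle[of z w y] by (auto simp: dist_commute)
        then show "h w = 0" using r(2) by auto
      qed
      moreover have "min r r' - dist z y > 0" using y by auto
      moreover have "y \<in> D" using y r' by auto
      ultimately show "y \<in> S" unfolding S_def by blast
    qed
    then show "\<exists>e>0. ball z e \<subseteq> S" using r r' by (intro exI[of _ "min r r'"]) auto
  qed
  have closedS: "D \<inter> closure S \<subseteq> S"
  proof
    fix z assume z: "z \<in> D \<inter> closure S"
    obtain r a where ra: "r > 0" "\<forall>w\<in>ball z r. (\<lambda>n. cscaleL ((w - z) ^ n) (a n)) sums h w"
      using an z unfolding op_analytic_on_def by blast
    have acc: "\<exists>w. 0 < cmod (w - z) \<and> cmod (w - z) < \<delta> \<and> h w = 0" if dpos: "\<delta> > 0" for \<delta>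
    proof (cases "z \<in> S")
      case True
      then obtain r1 where r1: "r1 > 0" "\<forall>w\<in>ball z r1. h w = 0" by (auto simp: S_def)
      define w where "w = z + of_real (min \<delta> r1 / 2)"
      have "cmod (w - z) = min \<delta> r1 / 2" using r1 that by (simp add: w_def)
      moreover have "w \<in> ball z r1" using r1 that by (simp add: w_def dist_norm)
      ultimately show ?thesis using r1 that by (intro exI[of _ w]) auto
    next
      case False
      have "z \<in> closure S" using z by auto
      then obtain y where y: "y \<in> S" "dist y z < \<delta>" using dpos unfolding closure_approachable by blast
      have "y \<noteq> z" using y False by auto
      moreover have "h y = 0" using y by (auto simp: S_def)
      ultimately show ?thesis using y by (intro exI[of _ y]) (auto simp: dist_norm)
    qed
    have a0: "a n = 0" for n
      by (rule ps_zero_acc[of r z a h]) (use ra acc in \<open>auto simp: dist_norm norm_minus_commute\<close>)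
    have "\<forall>w\<in>ball z r. h w = 0"
    proof
      fix w assume "w \<in> ball z r"
      then have "(\<lambda>n. cscaleL ((w - z) ^ n) (a n)) sums h w" using ra by blast
      then show "h w = 0" using a0 by (simp add: sums_iff)
    qed
    then show "z \<in> S" using z ra by (auto simp: S_def)
  qed
  have "S = D"
  proof -
    have "openin (top_of_set D) S" using openS SD by (auto simp: openin_open)
    moreover have "closedin (top_of_set D) S"
      unfolding closedin_closed using closedS SD closure_subset by (intro exI[of _ "closure S"]) auto
    moreover have "S \<noteq> {}" using zero z0 by (auto simp: S_def)
    ultimately show ?thesis using D(2) unfolding connected_clopen by blast
  qed
  show ?thesis
  proof
    fix z assume "z \<in> D"
    then have "z \<in> S" using \<open>S = D\<close> by simp
    then obtain r where "r > 0" "\<forall>w\<in>ball z r. h w = 0" by (auto simp: S_def)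
    then show "h z = 0" by auto
  qed
qed




lemmas bl_compL = bounded_bilinear.bounded_linear_left[OF bounded_bilinear_blinfun_compose]
lemmas bl_compR = bounded_bilinear.bounded_linear_right[OF bounded_bilinear_blinfun_compose]

lemma neumann:
  fixes E :: "'a::complex_banach \<Rightarrow>\<^sub>L 'a"
  assumes cl: "clinear_op E" and sm: "summable (\<lambda>n. cmod c ^ n * norm (opow E n))"
  defines "M \<equiv> (\<Sum>n. cscaleL (c^n) (opow E n))"
  shows "(\<lambda>n. cscaleL (c^n) (opow E n)) sums M"
    and "(id_blinfun - cscaleL c E) o\<^sub>L M = id_blinfun"
    and "M o\<^sub>L (id_blinfun - cscaleL c E) = id_blinfun"
proof -
  define f where "f n = cscaleL (c^n) (opow E n)" for n
  have nf: "norm (f n) = cmod c ^ n * norm (opow E n)" for n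
    unfolding f_def norm_cscaleL norm_power ..
  have "summable (\<lambda>n. norm (f n))" unfolding nf by (rule sm)
  then have sf: "summable f" by (rule summable_norm_cancel)
  show s: "(\<lambda>n. cscaleL (c^n) (opow E n)) sums M"
    using sf unfolding M_def f_def by (rule summable_sums)
  have f0: "f \<longlonglongrightarrow> 0" using summable_LIMSEQ_zero[OF sf] .
  have tel: "(\<lambda>n. f n - f (Suc n)) sums (f 0 - 0)" by (rule telescope_sums'[OF f0])
  have "f 0 = id_blinfun" by (simp add: f_def)
  have "(\<lambda>n. (id_blinfun - cscaleL c E) o\<^sub>L f n) sums ((id_blinfun - cscaleL c E) o\<^sub>L M)"
    using bounded_linear.sums[OF bl_compR s] unfolding f_def .
  moreover have "(id_blinfun - cscaleL c E) o\<^sub>L f n = f n - f (Suc n)" for n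
  proof -
    have "cscaleL c E o\<^sub>L f n = f (Suc n)"
      unfolding f_def cscaleL_compose_both[OF cl] opow_Suc power_Suc ..
    then show ?thesis by (simp only: bc_diff_left bc_id1)
  qed
  ultimately show "(id_blinfun - cscaleL c E) o\<^sub>L M = id_blinfun"
    using tel \<open>f 0 = id_blinfun\<close> by (simp add: sums_iff)
  have "(\<lambda>n. f n o\<^sub>L (id_blinfun - cscaleL c E)) sums (M o\<^sub>L (id_blinfun - cscaleL c E))"
    using bounded_linear.sums[OF bl_compL s] unfolding f_def .
  moreover have "f n o\<^sub>L (id_blinfun - cscaleL c E) = f n - f (Suc n)" for n
  proof -
    have "f n o\<^sub>L cscaleL c E = f (Suc n)"
      unfolding f_def cscaleL_compose_both[OF clinear_opow[OF cl]] opow_Suc'[symmetric] power_Suc mult.commute[of c] ..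
    then show ?thesis by (simp only: bc_diff_right bc_id2)
  qed
  ultimately show "M o\<^sub>L (id_blinfun - cscaleL c E) = id_blinfun"
    using tel \<open>f 0 = id_blinfun\<close> by (simp add: sums_iff)
qed




lemma cscaleL_sum_left: "(\<Sum>i\<in>I. cscaleL (c i) T) = cscaleL (\<Sum>i\<in>I. c i) T"
  by (induction I rule: infinite_finite_induct) (simp_all add: cscaleL_add_left)

lemma binom_term_le:
  fixes x y :: real
  assumes "0 \<le> x" "0 \<le> y" "l \<le> s"
  shows "of_nat (s choose l) * x^l * y^(s-l) \<le> (x + y)^s"
proof -
  have "of_nat (s choose l) * x^l * y^(s-l) \<le> (\<Sum>k\<le>s. of_nat (s choose k) * x^k * y^(s-k))"
    using assms by (intro member_le_sum) auto
  also have "\<dots> = (x + y)^s" by (rule binomial_ring[symmetric])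
  finally show ?thesis .
qed

lemma inner_summable:
  fixes a :: "nat \<Rightarrow> ('a::real_normed_vector \<Rightarrow>\<^sub>L 'b::complex_banach)"
  assumes sm: "summable (\<lambda>s. norm (a s) * t^s)" and z0: "cmod z0 < t"
  shows "summable (\<lambda>r. norm (cscaleL (of_nat ((l + r) choose l) * z0^r) (a (l + r))))"
proof -
  define d where "d = t - cmod z0"
  have d: "d > 0" using z0 by (simp add: d_def)
  have sh: "summable (\<lambda>r. norm (a (r + l)) * t^(r + l))" using sm by (subst summable_iff_shift)
  then have sh': "summable (\<lambda>r. (norm (a (r + l)) * t^(r + l)) / d^l)" by (rule summable_divide)
  show ?thesis
  proof (rule summable_comparison_test'[OF sh', of 0])
    fix r :: nat
    have "norm (norm (cscaleL (of_nat ((l + r) choose l) * z0^r) (a (l + r))))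
          = norm (a (l + r)) * (of_nat ((l + r) choose l) * cmod z0 ^ r)"
      by (simp add: norm_cscaleL norm_mult norm_power)
    also have "\<dots> \<le> norm (a (l + r)) * (t^(l + r) / d^l)"
    proof (rule mult_left_mono)
      have "of_nat ((l + r) choose l) * d^l * cmod z0 ^ (l + r - l) \<le> (d + cmod z0)^(l+r)"
        by (rule binom_term_le) (use d in auto)
      then have "of_nat ((l + r) choose l) * cmod z0 ^ r * d^l \<le> t^(l+r)"
        by (simp add: d_def algebra_simps)
      then show "of_nat ((l + r) choose l) * cmod z0 ^ r \<le> t^(l + r) / d^l"
        using d by (simp add: field_simps)
    qed simp
    finally show "norm (norm (cscaleL (of_nat ((l + r) choose l) * z0^r) (a (l + r))))
          \<le> (norm (a (r + l)) * t^(r + l)) / d^l" by (simp add: add.commute)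
  qed
qed

lemma reexpand:
  fixes a :: "nat \<Rightarrow> ('a::real_normed_vector \<Rightarrow>\<^sub>L 'b::complex_banach)"
  assumes sm: "summable (\<lambda>s. norm (a s) * t^s)" and zw: "cmod z0 + cmod w < t"
  shows "(\<lambda>l. cscaleL (w^l) (\<Sum>r. cscaleL (of_nat ((l + r) choose l) * z0^r) (a (l + r))))
           sums (\<Sum>s. cscaleL ((z0 + w)^s) (a s))"
proof -
  have z0: "cmod z0 < t" using zw by (smt (verit) norm_ge_zero)
  define G where "G = (\<lambda>(s,l). cscaleL (w^l * (of_nat (s choose l) * z0^(s-l))) (a s))"
  define F where "F = (\<lambda>(l,r). cscaleL (w^l * (of_nat ((l+r) choose l) * z0^r)) (a (l+r)))"
  define SG where "SG = Sigma (UNIV::nat set) (\<lambda>s. {..s})"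
  have nG: "(\<Sum>l\<le>s. norm (G (s,l))) = norm (a s) * (cmod z0 + cmod w)^s" for s
  proof -
    have "(\<Sum>l\<le>s. norm (G (s,l))) = (\<Sum>l\<le>s. norm (a s) * (of_nat (s choose l) * cmod w ^ l * cmod z0^(s-l)))"
      by (intro sum.cong) (auto simp: G_def norm_cscaleL norm_mult norm_power)
    also have "\<dots> = norm (a s) * (cmod w + cmod z0)^s"
      by (simp add: binomial_ring sum_distrib_left)
    finally show ?thesis by (simp add: add.commute)
  qed
  have sm2: "summable (\<lambda>s. norm (a s) * (cmod z0 + cmod w)^s)"
    by (rule summable_comparison_test'[OF sm, of 0])
       (use zw in \<open>auto intro!: mult_left_mono power_mono\<close>)
  have absG: "(\<lambda>x. norm (G x)) summable_on SG"
    unfolding SG_def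
  proof (rule iffD2[OF Infinite_Sum.abs_summable_on_Sigma_iff], intro conjI ballI)
    show "(\<lambda>y. norm (G (x, y))) summable_on {..x}" for x by simp
    have "(\<lambda>x. norm (\<Sum>\<^sub>\<infinity>y\<in>{..x}. norm (G (x, y)))) = (\<lambda>s. norm (norm (a s) * (cmod z0 + cmod w)^s))"
      by (simp add: nG)
    moreover have "(\<lambda>s. norm (norm (a s) * (cmod z0 + cmod w)^s)) summable_on UNIV"
      by (rule norm_summable_imp_summable_on) (use sm2 in simp)
    ultimately show "(\<lambda>x. norm (\<Sum>\<^sub>\<infinity>y\<in>{..x}. norm (G (x, y)))) summable_on UNIV" by simp
  qed
  have sG: "G summable_on SG" using absG by (rule abs_summable_summable)
  have sG': "(\<lambda>(s,l). G (s,l)) summable_on SG" using sG by simp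
  have outerS: "(\<lambda>s. infsum (\<lambda>l. G (s,l)) {..s}) summable_on UNIV"
    using summable_on_Sigma_banach[of "\<lambda>s l. G (s,l)" UNIV "\<lambda>s. {..s}"] sG' unfolding SG_def by simp
  have eqS: "infsum (\<lambda>s. infsum (\<lambda>l. G (s,l)) {..s}) UNIV = infsum G SG"
    using infsum_Sigma'_banach[of "\<lambda>s l. G (s,l)" UNIV "\<lambda>s. {..s}"] sG' unfolding SG_def by simp
  have inS: "infsum (\<lambda>l. G (s,l)) {..s} = cscaleL ((z0 + w)^s) (a s)" for s
  proof -
    have "infsum (\<lambda>l. G (s,l)) {..s} = (\<Sum>l\<le>s. cscaleL (w^l * (of_nat (s choose l) * z0^(s-l))) (a s))"
      by (simp add: G_def)
    also have "\<dots> = cscaleL (\<Sum>l\<le>s. w^l * (of_nat (s choose l) * z0^(s-l))) (a s)"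
      by (rule cscaleL_sum_left)
    also have "(\<Sum>l\<le>s. w^l * (of_nat (s choose l) * z0^(s-l))) = (w + z0)^s"
      by (simp add: binomial_ring algebra_simps)
    finally show ?thesis by (simp add: add.commute)
  qed
  have sumS: "(\<lambda>s. cscaleL ((z0 + w)^s) (a s)) sums infsum G SG"
    using has_sum_imp_sums[OF has_sum_infsum[OF outerS]] eqS inS by simp
  have reF: "F summable_on UNIV \<longleftrightarrow> G summable_on SG"
    by (rule summable_on_reindex_bij_witness[where i="\<lambda>(s,l). (l, s - l)" and j="\<lambda>(l,r). (l+r, l)"])
       (auto simp: SG_def F_def G_def)
  have sF: "F summable_on UNIV" using reF sG by simp
  have eqF: "infsum F UNIV = infsum G SG"
    by (rule infsum_reindex_bij_witness[where i="\<lambda>(s,l). (l, s - l)" and j="\<lambda>(l,r). (l+r, l)"])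
       (auto simp: SG_def F_def G_def)
  have sF': "(\<lambda>(l,r). F (l,r)) summable_on Sigma UNIV (\<lambda>_. UNIV)" using sF by simp
  have outerL: "(\<lambda>l. infsum (\<lambda>r. F (l,r)) UNIV) summable_on UNIV"
    using summable_on_Sigma_banach[of "\<lambda>l r. F (l,r)" UNIV "\<lambda>_. UNIV"] sF' by simp
  have eqL: "infsum (\<lambda>l. infsum (\<lambda>r. F (l,r)) UNIV) UNIV = infsum F UNIV"
    using infsum_Sigma'_banach[of "\<lambda>l r. F (l,r)" UNIV "\<lambda>_. UNIV"] sF' by simp
  have inL: "infsum (\<lambda>r. F (l,r)) UNIV = cscaleL (w^l) (\<Sum>r. cscaleL (of_nat ((l + r) choose l) * z0^r) (a (l + r)))" for l
  proof -
    define inn where "inn r = cscaleL (of_nat ((l + r) choose l) * z0^r) (a (l + r))" for r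
    have "summable (\<lambda>r. norm (inn r))" unfolding inn_def by (rule inner_summable[OF sm z0])
    then have "(inn has_sum suminf inn) UNIV"
      by (intro norm_summable_imp_has_sum) (auto intro: summable_sums summable_norm_cancel)
    then have "((\<lambda>r. cscaleL (w^l) (inn r)) has_sum cscaleL (w^l) (suminf inn)) UNIV"
      by (rule has_sum_bounded_linear[OF cscaleL_bl])
    moreover have "cscaleL (w^l) (inn r) = F (l,r)" for r by (simp add: inn_def F_def cscaleL_mult)
    ultimately show ?thesis unfolding inn_def by (simp add: infsumI)
  qed
  have "(\<lambda>l. cscaleL (w^l) (\<Sum>r. cscaleL (of_nat ((l + r) choose l) * z0^r) (a (l + r)))) sums infsum F UNIV"
    using has_sum_imp_sums[OF has_sum_infsum[OF outerL]] eqL inL by simp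
  then show ?thesis using sumS eqF by (simp add: sums_iff)
qed




lemma charsum:
  assumes M: "M > (0::nat)"
  shows "(\<Sum>k<M. cis (2*pi*real k * of_int m / real M)) = (if int M dvd m then of_nat M else 0)"
proof -
  define x where "x = cis (2*pi* of_int m / real M)"
  have xk: "cis (2*pi*real k * of_int m / real M) = x ^ k" for k
    unfolding x_def Complex.DeMoivre by (simp add: algebra_simps)
  have xM: "x ^ M = 1"
  proof -
    have "x ^ M = cis (2 * pi * of_int m)" unfolding x_def Complex.DeMoivre using M by simp
    also have "\<dots> = 1" by (rule cis_multiple_2pi) simp
    finally show ?thesis .
  qed
  show ?thesis
  proof (cases "int M dvd m")
    case True
    then obtain q where q: "m = int M * q" by (auto elim: dvdE)
    have "x = cis (2 * pi * of_int q)" using M unfolding x_def q by (simp add: field_simps)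
    also have "\<dots> = 1" by (rule cis_multiple_2pi) simp
    finally have "x = 1" .
    then show ?thesis using True by (simp add: xk)
  next
    case False
    have "x \<noteq> 1"
    proof
      assume "x = 1"
      then have "exp (\<i> * complex_of_real (2*pi* of_int m / real M)) = 1" by (simp add: x_def cis_conv_exp)
      then obtain q :: int where q: "2*pi* of_int m / real M = of_int (2*q) * pi"
        unfolding exp_eq_1 by auto
      then have "of_int m = real M * of_int q" using M by (simp add: field_simps)
      then have "m = int M * q" by (metis of_int_eq_iff of_int_mult of_int_of_nat_eq)
      then show False using False by simp
    qed
    then have "(\<Sum>k<M. x ^ k) = 0" using xM by (simp add: geometric_sum)
    then show ?thesis using False by (simp add: xk)
  qed
qed

lemma coef_identity:
  assumes M: "M > (0::nat)" and rho: "\<rho> > 0"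
  shows "(\<Sum>k<M. (cis (-(2*pi*real k * of_int n/real M)) / of_nat M) * (complex_of_real \<rho> * cis (2*pi*real k/real M)) powi j)
        = (if int M dvd (j - n) then complex_of_real \<rho> powi j else 0)"
proof -
  have "(cis (-(2*pi*real k * of_int n/real M)) / of_nat M) * (complex_of_real \<rho> * cis (2*pi*real k/real M)) powi j
       = (complex_of_real \<rho> powi j / of_nat M) * cis (2*pi*real k * of_int (j - n) / real M)" for k
  proof -
    have "(complex_of_real \<rho> * cis (2*pi*real k/real M)) powi j = complex_of_real \<rho> powi j * cis (of_int j * (2*pi*real k/real M))"
      by (simp add: power_int_mult_distrib cis_power_int)
    moreover have "cis (-(2*pi*real k * of_int n/real M)) * cis (of_int j * (2*pi*real k/real M)) = cis (2*pi*real k * of_int (j - n) / real M)"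
      by (simp add: cis_mult field_simps diff_divide_distrib)
    ultimately show ?thesis by (simp add: field_simps)
  qed
  then have "(\<Sum>k<M. (cis (-(2*pi*real k * of_int n/real M)) / of_nat M) * (complex_of_real \<rho> * cis (2*pi*real k/real M)) powi j)
     = (\<Sum>k<M. (complex_of_real \<rho> powi j / of_nat M) * cis (2*pi*real k * of_int (j - n) / real M))"
    by (intro sum.cong) auto
  also have "\<dots> = (complex_of_real \<rho> powi j / of_nat M) * (\<Sum>k<M. cis (2*pi*real k * of_int (j - n) / real M))"
    by (rule sum_distrib_left[symmetric])
  also have "\<dots> = (if int M dvd (j - n) then complex_of_real \<rho> powi j else 0)"
    unfolding charsum[OF M, of "j - n"] using M by simp
  finally show ?thesis .
qed




lemma has_sum_sum_fin:
  fixes f :: "'i \<Rightarrow> 'a \<Rightarrow> 'b::{topological_comm_monoid_add}"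
  assumes "finite K" "\<And>k. k \<in> K \<Longrightarrow> (f k has_sum s k) A"
  shows "((\<lambda>x. \<Sum>k\<in>K. f k x) has_sum (\<Sum>k\<in>K. s k)) A"
  using assms by (induction K rule: finite_induct) (auto intro: has_sum_add)

lemma has_sum_delta:
  "((\<lambda>j. if j = n then X else (0::'b::{topological_comm_monoid_add})) has_sum X) UNIV"
proof -
  have "((\<lambda>j. if j = n then X else 0) has_sum (\<Sum>j\<in>{n}. if j = n then X else 0)) {n}"
    by (rule has_sum_finite) simp
  then have "((\<lambda>j. if j = n then X else 0) has_sum X) {n}" by simp
  moreover have "((\<lambda>j. if j = n then X else (0::'b)) has_sum X) UNIV \<longleftrightarrow> ((\<lambda>j. if j = n then X else 0) has_sum X) {n}"
    by (rule has_sum_cong_neutral) auto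
  ultimately show ?thesis by simp
qed

lemma laurent_unique:
  fixes B :: "int \<Rightarrow> ('a::real_normed_vector \<Rightarrow>\<^sub>L 'b::complex_banach)"
  assumes rho: "\<rho> > 0"
    and abs: "(\<lambda>j. norm (B j) * \<rho> powi j) summable_on UNIV"
    and zero: "\<And>w. cmod w = \<rho> \<Longrightarrow> ((\<lambda>j. cscaleL (w powi j) (B j)) has_sum 0) UNIV"
  shows "B n = 0"
proof -
  define g where "g j = norm (B j) * \<rho> powi j" for j
  have g0: "g j \<ge> 0" for j using rho by (simp add: g_def)
  have sg: "g summable_on UNIV" using abs by (simp add: g_def[abs_def])
  have bound: "norm (B n) * \<rho> powi n \<le> e" if e: "e > 0" for e
  proof -
    obtain F where F: "finite F" "dist (sum g F) (infsum g UNIV) \<le> e"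
      using infsum_finite_approximation[OF sg e] by blast
    define M where "M = nat (Max (insert 0 ((\<lambda>j. \<bar>j - n\<bar>) ` F)) + 1)"
    have Mx0: "Max (insert 0 ((\<lambda>j. \<bar>j - n\<bar>) ` F)) \<ge> 0" by (rule Max_ge) (use F(1) in auto)
    have Mpos: "M > 0" unfolding M_def using Mx0 by simp
    have MF: "\<bar>j - n\<bar> < int M" if "j \<in> F" for j
    proof -
      have "\<bar>j - n\<bar> \<le> Max (insert 0 ((\<lambda>j. \<bar>j - n\<bar>) ` F))" using F(1) that by (intro Max_ge) auto
      moreover have "Max (insert 0 ((\<lambda>j. \<bar>j - n\<bar>) ` F)) \<ge> 0" by (rule Max_ge) (use F(1) in auto)
      ultimately show ?thesis unfolding M_def by simp
    qed
    define w where "w k = complex_of_real \<rho> * cis (2*pi*real k/real M)" for k :: nat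
    define c where "c k = cis (-(2*pi*real k * of_int n/real M)) / of_nat M" for k :: nat
    have cw: "cmod (w k) = \<rho>" for k using rho by (simp add: w_def norm_mult)
    have "((\<lambda>j. \<Sum>k<M. cscaleL (c k) (cscaleL (w k powi j) (B j))) has_sum (\<Sum>k<M. cscaleL (c k) 0)) UNIV"
      by (intro has_sum_sum_fin has_sum_bounded_linear[OF cscaleL_bl] zero cw) auto
    moreover have "(\<Sum>k<M. cscaleL (c k) (cscaleL (w k powi j) (B j))) =
         (if int M dvd (j - n) then cscaleL (complex_of_real \<rho> powi j) (B j) else 0)" for j
    proof -
      have "(\<Sum>k<M. cscaleL (c k) (cscaleL (w k powi j) (B j))) = cscaleL (\<Sum>k<M. c k * w k powi j) (B j)"
        by (simp add: cscaleL_mult cscaleL_sum_left)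
      also have "(\<Sum>k<M. c k * w k powi j) = (if int M dvd (j - n) then complex_of_real \<rho> powi j else 0)"
        unfolding c_def w_def by (rule coef_identity[OF Mpos rho])
      finally show ?thesis by simp
    qed
    ultimately have h: "((\<lambda>j. if int M dvd (j - n) then cscaleL (complex_of_real \<rho> powi j) (B j) else 0) has_sum 0) UNIV"
      by simp
    define G where "G = {j. j \<noteq> n \<and> int M dvd (j - n)}"
    define hG where "hG j = (if j \<in> G then cscaleL (complex_of_real \<rho> powi j) (B j) else 0)" for j
    have "((\<lambda>j. (if int M dvd (j - n) then cscaleL (complex_of_real \<rho> powi j) (B j) else 0)
             + (- (if j = n then cscaleL (complex_of_real \<rho> powi n) (B n) else 0))) has_sum (0 + - cscaleL (complex_of_real \<rho> powi n) (B n))) UNIV"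
      by (intro has_sum_add h has_sum_uminus[THEN iffD2]) (simp add: has_sum_delta)
    moreover have "(if int M dvd (j - n) then cscaleL (complex_of_real \<rho> powi j) (B j) else 0)
             + (- (if j = n then cscaleL (complex_of_real \<rho> powi n) (B n) else 0)) = hG j" for j
      by (auto simp: hG_def G_def)
    ultimately have hGs: "(hG has_sum (- cscaleL (complex_of_real \<rho> powi n) (B n))) UNIV" by simp
    have GF: "G \<inter> F = {}"
    proof (rule ccontr)
      assume "G \<inter> F \<noteq> {}"
      then obtain j where j: "j \<in> G" "j \<in> F" by blast
      then have "int M dvd (j - n)" "j - n \<noteq> 0" by (auto simp: G_def)
      then have "int M \<le> \<bar>j - n\<bar>" using dvd_imp_le_int[of "j - n" "int M"] by simp
      with MF[OF j(2)] show False by simp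
    qed
    have sgG: "g summable_on G" using sg by (rule summable_on_subset_banach) simp
    have nhG: "norm (hG j) = (if j \<in> G then g j else 0)" for j
      using rho by (simp add: hG_def g_def norm_cscaleL norm_power_int mult.commute)
    have "((\<lambda>j. if j \<in> G then g j else 0) has_sum infsum g G) UNIV \<longleftrightarrow> (g has_sum infsum g G) G"
      by (rule has_sum_cong_neutral) auto
    then have "((\<lambda>j. if j \<in> G then g j else 0) has_sum infsum g G) UNIV" using sgG by simp
    then have "norm (- cscaleL (complex_of_real \<rho> powi n) (B n)) \<le> infsum g G"
      by (intro norm_has_sum_bound[OF _ hGs]) (simp add: nhG)
    moreover have "norm (- cscaleL (complex_of_real \<rho> powi n) (B n)) = norm (B n) * \<rho> powi n"
      using rho by (simp add: norm_cscaleL norm_power_int mult.commute)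
    moreover have "infsum g G \<le> e"
    proof -
      have "infsum g (G \<union> F) = infsum g G + infsum g F"
        by (rule infsum_Un_disjoint) (use sgG F GF in auto)
      moreover have "infsum g (G \<union> F) \<le> infsum g UNIV"
        by (rule infsum_mono2) (use sg g0 summable_on_subset_banach[OF sg] in auto)
      moreover have "infsum g F = sum g F" using F by simp
      ultimately show ?thesis using F(2) by (simp add: dist_real_def)
    qed
    ultimately show ?thesis by linarith
  qed
  have "norm (B n) * \<rho> powi n \<le> 0"
    using bound by (metis dense not_le)
  moreover have "\<rho> powi n > 0" using rho by simp
  ultimately show "B n = 0" by (simp add: mult_le_0_iff)
qed




lemma real_summable_on_le:
  fixes f g :: "'i \<Rightarrow> real"
  assumes "g summable_on A" "\<And>x. x \<in> A \<Longrightarrow> 0 \<le> f x" "\<And>x. x \<in> A \<Longrightarrow> f x \<le> g x"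
  shows "f summable_on A"
proof -
  have gn: "(\<lambda>x. norm (g x)) summable_on A"
    using assms by (subst summable_on_cong[where g=g]) (auto, smt (verit))
  have "(\<lambda>x. norm (f x)) summable_on A"
    by (rule Infinite_Sum.abs_summable_on_comparison_test[OF gn]) (use assms in force)
  then show ?thesis using assms(2) by (subst summable_on_cong[where g="\<lambda>x. norm (f x)"]) auto
qed

lemma int_summable_bounded:
  fixes f :: "int \<Rightarrow> 'a::banach"
  assumes "f summable_on UNIV"
  shows "\<exists>K. \<forall>j. norm (f j) \<le> K"
proof -
  have "f summable_on range int" using assms by (rule summable_on_subset_banach) simp
  then have "(f \<circ> int) summable_on UNIV" by (subst summable_on_reindex[symmetric]) (auto simp: inj_on_def)
  then have "summable (f \<circ> int)" by (rule summable_on_imp_summable)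
  then obtain K1 where K1: "\<And>n. norm (f (int n)) \<le> K1" using summable_bounded_terms by fastforce
  have "f summable_on range (\<lambda>n. - int n)" using assms by (rule summable_on_subset_banach) simp
  then have "(f \<circ> (\<lambda>n. - int n)) summable_on UNIV" by (subst summable_on_reindex[symmetric]) (auto simp: inj_on_def)
  then have "summable (f \<circ> (\<lambda>n. - int n))" by (rule summable_on_imp_summable)
  then obtain K2 where K2: "\<And>n. norm (f (- int n)) \<le> K2" using summable_bounded_terms by fastforce
  have "norm (f j) \<le> max K1 K2" for j
  proof (cases "j \<ge> 0")
    case True then show ?thesis using K1[of "nat j"] by simp
  next
    case False then show ?thesis using K2[of "nat (-j)"] by simp
  qed
  then show ?thesis by blast
qed

lemma int_summable_on_split:
  fixes g :: "int \<Rightarrow> real"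
  assumes "summable (\<lambda>n. g (int n))" "summable (\<lambda>n. g (- int (Suc n)))" "\<And>j. g j \<ge> 0"
  shows "g summable_on UNIV"
proof -
  have "(g \<circ> int) summable_on UNIV"
    by (rule norm_summable_imp_summable_on) (use assms in simp)
  then have s1: "g summable_on range int" by (subst summable_on_reindex) (auto simp: inj_on_def)
  have "(g \<circ> (\<lambda>n. - int (Suc n))) summable_on UNIV"
    by (rule norm_summable_imp_summable_on) (use assms in \<open>simp add: o_def\<close>)
  then have s2: "g summable_on range (\<lambda>n. - int (Suc n))" by (subst summable_on_reindex) (auto simp: inj_on_def)
  have "g summable_on (range int \<union> range (\<lambda>n. - int (Suc n)))"
    by (rule summable_on_Un_disjoint[OF s1 s2]) auto
  moreover have "range int \<union> range (\<lambda>n. - int (Suc n)) = UNIV"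
  proof -
    have "j \<in> range int \<union> range (\<lambda>n. - int (Suc n))" for j
    proof (cases "j \<ge> 0")
      case True then show ?thesis by (auto intro: image_eqI[of _ _ "nat j"])
    next
      case False then show ?thesis by (auto intro!: image_eqI[of _ _ "nat (-j - 1)"])
    qed
    then show ?thesis by blast
  qed
  ultimately show ?thesis by simp
qed

locale MT =
  fixes A0 A1 :: "'x::complex_banach \<Rightarrow>\<^sub>L 'y::complex_banach"
    and R :: "complex \<Rightarrow> ('y \<Rightarrow>\<^sub>L 'x)"
    and T :: "int \<Rightarrow> ('y \<Rightarrow>\<^sub>L 'x)"
    and \<epsilon> c :: real
  assumes A0_lin: "clinear_op A0" and A1_lin: "clinear_op A1"
    and eps_pos: "\<epsilon> > 0"
    and R_inv: "\<forall>z. cmod z < 1 + \<epsilon> \<and> z \<noteq> 1 \<longrightarrow>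
                  R z o\<^sub>L (A0 + cscaleL z A1) = id_blinfun \<and> (A0 + cscaleL z A1) o\<^sub>L R z = id_blinfun"
    and R_analytic: "op_analytic_on {z. cmod z < 1 + \<epsilon> \<and> z \<noteq> 1} R"
    and T_lin: "\<forall>j. clinear_op (T j)"
    and Laurent: "\<forall>z. 0 < cmod (z - 1) \<and> cmod (z - 1) < \<epsilon> \<longrightarrow>
                  ((\<lambda>j. cscaleL ((z - 1) powi j) (T j)) has_sum R z) UNIV"
    and c_pos: "c > 0"
    and Q_bound: "\<forall>s. norm ((-1::real) ^ s *\<^sub>R (opow (op_inv A0 o\<^sub>L A1) s o\<^sub>L op_inv A0)
                     + (opow (op_inv (id_blinfun - (T (-1) o\<^sub>L (A0 + A1)))) (s + 1) o\<^sub>L T (-1)))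
                   \<le> c / (1 + \<epsilon>) ^ s"
begin

abbreviation "C0 \<equiv> A0 + A1"
abbreviation "N \<equiv> T (-1) o\<^sub>L C0"

lemma C0_lin: "clinear_op C0" using A0_lin A1_lin by (rule clinear_add)
lemma N_lin: "clinear_op N" using T_lin C0_lin by (intro clinear_compose) auto

lemma Az: "A0 + cscaleL z A1 = C0 + cscaleL (z - 1) A1"
proof -
  have "cscaleL z A1 = cscaleL (1 + (z - 1)) A1" by simp
  also have "\<dots> = A1 + cscaleL (z - 1) A1" by (simp only: cscaleL_add_left cscaleL_1)
  finally show ?thesis by (simp add: add.assoc)
qed

lemma coef_bound:
  assumes "0 < \<delta>" "\<delta> < \<epsilon>"
  shows "\<exists>K. \<forall>j. norm (T j) * \<delta> powi j \<le> K"
proof -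
  have "((\<lambda>j. cscaleL ((complex_of_real \<delta>) powi j) (T j)) has_sum R (1 + complex_of_real \<delta>)) UNIV"
    using Laurent[rule_format, of "1 + complex_of_real \<delta>"] assms by simp
  then obtain K where K: "\<And>j. norm (cscaleL ((complex_of_real \<delta>) powi j) (T j)) \<le> K"
    using int_summable_bounded[of "\<lambda>j. cscaleL ((complex_of_real \<delta>) powi j) (T j)"] summable_on_def by blast
  have "norm (T j) * \<delta> powi j \<le> K" for j
    using K[of j] assms by (simp add: norm_cscaleL norm_power_int mult.commute)
  then show ?thesis by blast
qed

lemma abs_T:
  assumes "0 < \<rho>" "\<rho> < \<epsilon>"
  shows "(\<lambda>j. norm (T j) * \<rho> powi j) summable_on UNIV"
proof -
  define \<rho>2 where "\<rho>2 = (\<rho> + \<epsilon>) / 2"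
  have r2: "\<rho> < \<rho>2" "\<rho>2 < \<epsilon>" using assms by (auto simp: \<rho>2_def)
  obtain K1 where K1: "\<And>j. norm (T j) * (\<rho>/2) powi j \<le> K1" using coef_bound[of "\<rho>/2"] assms by auto
  obtain K2 where K2: "\<And>j. norm (T j) * \<rho>2 powi j \<le> K2" using coef_bound[of \<rho>2] assms r2 by auto
  have pos: "summable (\<lambda>n. norm (T (int n)) * \<rho> powi (int n))"
  proof -
    have "summable (\<lambda>n. norm (T (int n)) * \<rho> ^ n)"
      by (rule geom_summable[of "\<lambda>n. T (int n)" \<rho>2 K2]) (use K2[of "int _"] assms r2 in auto)
    then show ?thesis by simp
  qed
  have neg: "summable (\<lambda>n. norm (T (- int (Suc n))) * \<rho> powi (- int (Suc n)))"
  proof -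
    have "summable (\<lambda>n. K1 * (1/2) ^ Suc n)" by (intro summable_mult summable_geometric_iff[THEN iffD2] summable_Suc_iff[THEN iffD2]) auto
    moreover have "norm (norm (T (- int (Suc n))) * \<rho> powi (- int (Suc n))) \<le> K1 * (1/2) ^ Suc n" for n
    proof -
      have "norm (norm (T (- int (Suc n))) * \<rho> powi (- int (Suc n)))
           = (norm (T (- int (Suc n))) * (\<rho>/2) powi (- int (Suc n))) * (1/2) ^ Suc n"
      proof -
        have e1: "\<rho> powi (- int (Suc n)) = 1 / \<rho> ^ Suc n"
          using power_int_minus[of \<rho> "int (Suc n)"] power_int_of_nat[of \<rho> "Suc n"] by (simp only: divide_inverse mult_1)
        have e2: "(\<rho>/2) powi (- int (Suc n)) = 1 / (\<rho>/2) ^ Suc n"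
          using power_int_minus[of "\<rho>/2" "int (Suc n)"] power_int_of_nat[of "\<rho>/2" "Suc n"] by (simp only: divide_inverse mult_1)
        have "norm (T (- int (Suc n))) * (1 / \<rho> ^ Suc n) = norm (T (- int (Suc n))) * (1 / (\<rho>/2) ^ Suc n) * (1/2) ^ Suc n"
          using assms by (simp add: power_divide)
        then show ?thesis unfolding e1 e2 using assms by simp
      qed
      also have "\<dots> \<le> K1 * (1/2) ^ Suc n" using K1 by (intro mult_right_mono) auto
      finally show ?thesis .
    qed
    ultimately show ?thesis by (rule summable_comparison_test'[where N=0])
  qed
  show ?thesis
    by (rule int_summable_on_split[OF pos neg]) (use assms in simp)
qed

end



context MT begin

lemma shift_has_sum:
  fixes f :: "int \<Rightarrow> 'b::{topological_comm_monoid_add}"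
  shows "(f has_sum S) UNIV \<longleftrightarrow> ((\<lambda>j. f (j - 1)) has_sum S) UNIV"
  by (rule has_sum_reindex_bij_witness[where i="\<lambda>j. j - 1" and j="\<lambda>j. j + 1"]) auto

lemma shift_summable_on:
  fixes f :: "int \<Rightarrow> 'b::{topological_comm_monoid_add}"
  shows "f summable_on UNIV \<Longrightarrow> (\<lambda>j. f (j - 1)) summable_on UNIV"
  using shift_has_sum unfolding summable_on_def by blast

lemma abs_B:
  fixes B :: "int \<Rightarrow> ('a::real_normed_vector \<Rightarrow>\<^sub>L 'b::real_normed_vector)"
  assumes rho: "0 < \<rho>" "\<rho> < \<epsilon>"
    and Bb: "\<And>j. norm (B j) \<le> ka * norm (T j) + kb * norm (T (j - 1)) + (if j = 0 then 1 else 0)"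
    and k: "ka \<ge> 0" "kb \<ge> 0"
  shows "(\<lambda>j. norm (B j) * \<rho> powi j) summable_on UNIV"
proof -
  define g where "g j = norm (T j) * \<rho> powi j" for j
  have sg: "g summable_on UNIV" unfolding g_def by (rule abs_T[OF rho])
  have sg1: "(\<lambda>j. g (j - 1)) summable_on UNIV" by (rule shift_summable_on[OF sg])
  have sd: "(\<lambda>j. if j = 0 then 1 else (0::real)) summable_on UNIV"
    using has_sum_delta[of 0 "1::real"] unfolding summable_on_def by blast
  have "(\<lambda>j. ka * g j + (kb * \<rho>) * g (j - 1) + (if j = 0 then 1 else 0)) summable_on UNIV"
    by (intro summable_on_add summable_on_cmult_right sg sg1 sd)
  then show ?thesis
  proof (rule real_summable_on_le)
    fix j :: int
    show "0 \<le> norm (B j) * \<rho> powi j" using rho by simp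
    have rj: "\<rho> powi j = \<rho> * \<rho> powi (j - 1)"
      using power_int_add_1'[of \<rho> "j - 1"] rho by simp
    have "norm (B j) * \<rho> powi j \<le> (ka * norm (T j) + kb * norm (T (j - 1)) + (if j = 0 then 1 else 0)) * \<rho> powi j"
      using Bb rho by (intro mult_right_mono) auto
    also have "\<dots> = ka * g j + (kb * \<rho>) * g (j - 1) + (if j = 0 then 1 else 0)"
    proof -
      have "kb * norm (T (j - 1)) * \<rho> powi j = (kb * \<rho>) * g (j - 1)"
        unfolding rj g_def by (simp add: algebra_simps)
      moreover have "(if j = 0 then 1 else 0) * \<rho> powi j = (if j = 0 then 1 else (0::real))" by simp
      moreover have "ka * norm (T j) * \<rho> powi j = ka * g j" by (simp add: g_def)
      ultimately show ?thesis by (simp only: distrib_right)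
    qed
    finally show "norm (B j) * \<rho> powi j \<le> ka * g j + (kb * \<rho>) * g (j - 1) + (if j = 0 then 1 else 0)" .
  qed
qed

lemma ident_I: "(T j o\<^sub>L C0) + (T (j - 1) o\<^sub>L A1) = (if j = 0 then id_blinfun else 0)"
proof -
  define \<rho> where "\<rho> = \<epsilon> / 2"
  have rho: "0 < \<rho>" "\<rho> < \<epsilon>" using eps_pos by (auto simp: \<rho>_def)
  define B where "B j = (T j o\<^sub>L C0) + (T (j - 1) o\<^sub>L A1) - (if j = 0 then id_blinfun else 0)" for j
  have "B j = 0"
  proof (rule laurent_unique[OF rho(1)])
    show "(\<lambda>j. norm (B j) * \<rho> powi j) summable_on UNIV"
    proof (rule abs_B[OF rho, where ka="norm C0" and kb="norm A1"])
      fix j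
      have "norm (B j) \<le> norm (T j o\<^sub>L C0) + norm (T (j - 1) o\<^sub>L A1) + norm (if j = 0 then id_blinfun else (0::'x \<Rightarrow>\<^sub>L 'x))"
        unfolding B_def using norm_triangle_ineq4[of "(T j o\<^sub>L C0) + (T (j - 1) o\<^sub>L A1)" "if j = 0 then id_blinfun else (0::'x \<Rightarrow>\<^sub>L 'x)"]
          norm_triangle_ineq[of "T j o\<^sub>L C0" "T (j - 1) o\<^sub>L A1"] by linarith
      also have "\<dots> \<le> norm C0 * norm (T j) + norm A1 * norm (T (j - 1)) + (if j = 0 then 1 else 0)"
        using norm_blinfun_compose[of "T j" C0] norm_blinfun_compose[of "T (j - 1)" A1] norm_blinfun_id_le
        by (intro add_mono) (auto simp: mult.commute)
      finally show "norm (B j) \<le> norm C0 * norm (T j) + norm A1 * norm (T (j - 1)) + (if j = 0 then 1 else 0)" .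
    qed auto
  next
    fix w :: complex assume w: "cmod w = \<rho>"
    define z where "z = 1 + w"
    have wz: "z - 1 = w" by (simp add: z_def)
    have w0: "w \<noteq> 0" using w rho by auto
    have zD: "cmod z < 1 + \<epsilon>" "z \<noteq> 1"
      using w rho w0 norm_triangle_ineq[of 1 w] by (auto simp: z_def)
    have L: "((\<lambda>j. cscaleL (w powi j) (T j)) has_sum R z) UNIV"
      using Laurent[rule_format, of z] w rho by (simp add: wz)
    have inv: "R z o\<^sub>L (C0 + cscaleL w A1) = id_blinfun"
    proof -
      have "R z o\<^sub>L (A0 + cscaleL z A1) = id_blinfun" using R_inv zD by blast
      then show ?thesis unfolding Az[of z] wz .
    qed
    have h1: "((\<lambda>j. cscaleL (w powi j) (T j o\<^sub>L C0)) has_sum (R z o\<^sub>L C0)) UNIV"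
      using has_sum_bounded_linear[OF bl_compL L, of C0] by (simp add: cscaleL_compose_left)
    have h2: "((\<lambda>j. cscaleL (w powi (j + 1)) (T j o\<^sub>L A1)) has_sum (R z o\<^sub>L cscaleL w A1)) UNIV"
    proof -
      have "((\<lambda>j. cscaleL (w powi j) (T j) o\<^sub>L cscaleL w A1) has_sum (R z o\<^sub>L cscaleL w A1)) UNIV"
        by (rule has_sum_bounded_linear[OF bl_compL L])
      moreover have "cscaleL (w powi j) (T j) o\<^sub>L cscaleL w A1 = cscaleL (w powi (j + 1)) (T j o\<^sub>L A1)" for j
        using T_lin w0 by (simp add: cscaleL_compose_both power_int_add_1)
      ultimately show ?thesis by simp
    qed
    have h2': "((\<lambda>j. cscaleL (w powi j) (T (j - 1) o\<^sub>L A1)) has_sum (R z o\<^sub>L cscaleL w A1)) UNIV"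
      using h2 shift_has_sum[of "\<lambda>j. cscaleL (w powi (j + 1)) (T j o\<^sub>L A1)"] by simp
    have h3: "((\<lambda>j. cscaleL (w powi j) (T j o\<^sub>L C0) + cscaleL (w powi j) (T (j - 1) o\<^sub>L A1)
              + - (if j = 0 then id_blinfun else 0)) has_sum ((R z o\<^sub>L C0) + (R z o\<^sub>L cscaleL w A1) + - id_blinfun)) UNIV"
      by (intro has_sum_add h1 h2' has_sum_uminus[THEN iffD2]) (simp add: has_sum_delta)
    have "(R z o\<^sub>L C0) + (R z o\<^sub>L cscaleL w A1) + - id_blinfun = 0"
      using inv by (simp add: bc_add_right)
    moreover have "cscaleL (w powi j) (T j o\<^sub>L C0) + cscaleL (w powi j) (T (j - 1) o\<^sub>L A1)
              + - (if j = 0 then id_blinfun else 0) = cscaleL (w powi j) (B j)" for j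
      by (simp add: B_def cscaleL_add cscaleL_diff)
    ultimately show "((\<lambda>j. cscaleL (w powi j) (B j)) has_sum 0) UNIV" using h3 by simp
  qed
  then show ?thesis by (simp add: B_def)
qed

lemma ident_II: "(C0 o\<^sub>L T j) + (A1 o\<^sub>L T (j - 1)) = (if j = 0 then id_blinfun else 0)"
proof -
  define \<rho> where "\<rho> = \<epsilon> / 2"
  have rho: "0 < \<rho>" "\<rho> < \<epsilon>" using eps_pos by (auto simp: \<rho>_def)
  define B where "B j = (C0 o\<^sub>L T j) + (A1 o\<^sub>L T (j - 1)) - (if j = 0 then id_blinfun else 0)" for j
  have "B j = 0"
  proof (rule laurent_unique[OF rho(1)])
    show "(\<lambda>j. norm (B j) * \<rho> powi j) summable_on UNIV"
    proof (rule abs_B[OF rho, where ka="norm C0" and kb="norm A1"])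
      fix j
      have "norm (B j) \<le> norm (C0 o\<^sub>L T j) + norm (A1 o\<^sub>L T (j - 1)) + norm (if j = 0 then id_blinfun else (0::'y \<Rightarrow>\<^sub>L 'y))"
        unfolding B_def using norm_triangle_ineq4[of "(C0 o\<^sub>L T j) + (A1 o\<^sub>L T (j - 1))" "if j = 0 then id_blinfun else (0::'y \<Rightarrow>\<^sub>L 'y)"]
          norm_triangle_ineq[of "C0 o\<^sub>L T j" "A1 o\<^sub>L T (j - 1)"] by linarith
      also have "\<dots> \<le> norm C0 * norm (T j) + norm A1 * norm (T (j - 1)) + (if j = 0 then 1 else 0)"
        using norm_blinfun_compose[of C0 "T j"] norm_blinfun_compose[of A1 "T (j - 1)"] norm_blinfun_id_le
        by (intro add_mono) auto
      finally show "norm (B j) \<le> norm C0 * norm (T j) + norm A1 * norm (T (j - 1)) + (if j = 0 then 1 else 0)" .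
    qed auto
  next
    fix w :: complex assume w: "cmod w = \<rho>"
    define z where "z = 1 + w"
    have wz: "z - 1 = w" by (simp add: z_def)
    have w0: "w \<noteq> 0" using w rho by auto
    have zD: "cmod z < 1 + \<epsilon>" "z \<noteq> 1"
      using w rho w0 norm_triangle_ineq[of 1 w] by (auto simp: z_def)
    have L: "((\<lambda>j. cscaleL (w powi j) (T j)) has_sum R z) UNIV"
      using Laurent[rule_format, of z] w rho by (simp add: wz)
    have inv: "(C0 + cscaleL w A1) o\<^sub>L R z = id_blinfun"
    proof -
      have "(A0 + cscaleL z A1) o\<^sub>L R z = id_blinfun" using R_inv zD by blast
      then show ?thesis unfolding Az[of z] wz .
    qed
    have h1: "((\<lambda>j. cscaleL (w powi j) (C0 o\<^sub>L T j)) has_sum (C0 o\<^sub>L R z)) UNIV"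
      using has_sum_bounded_linear[OF bl_compR L, of C0] by (simp add: cscaleL_compose_right[OF C0_lin])
    have h2: "((\<lambda>j. cscaleL (w powi (j + 1)) (A1 o\<^sub>L T j)) has_sum (cscaleL w A1 o\<^sub>L R z)) UNIV"
    proof -
      have "((\<lambda>j. cscaleL w A1 o\<^sub>L cscaleL (w powi j) (T j)) has_sum (cscaleL w A1 o\<^sub>L R z)) UNIV"
        by (rule has_sum_bounded_linear[OF bl_compR L])
      moreover have "cscaleL w A1 o\<^sub>L cscaleL (w powi j) (T j) = cscaleL (w powi (j + 1)) (A1 o\<^sub>L T j)" for j
        using A1_lin w0 by (simp add: cscaleL_compose_both power_int_add_1')
      ultimately show ?thesis by simp
    qed
    have h2': "((\<lambda>j. cscaleL (w powi j) (A1 o\<^sub>L T (j - 1))) has_sum (cscaleL w A1 o\<^sub>L R z)) UNIV"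
      using h2 shift_has_sum[of "\<lambda>j. cscaleL (w powi (j + 1)) (A1 o\<^sub>L T j)"] by simp
    have h3: "((\<lambda>j. cscaleL (w powi j) (C0 o\<^sub>L T j) + cscaleL (w powi j) (A1 o\<^sub>L T (j - 1))
              + - (if j = 0 then id_blinfun else 0)) has_sum ((C0 o\<^sub>L R z) + (cscaleL w A1 o\<^sub>L R z) + - id_blinfun)) UNIV"
      by (intro has_sum_add h1 h2' has_sum_uminus[THEN iffD2]) (simp add: has_sum_delta)
    have "(C0 o\<^sub>L R z) + (cscaleL w A1 o\<^sub>L R z) + - id_blinfun = 0"
      using inv by (simp add: bc_add_left)
    moreover have "cscaleL (w powi j) (C0 o\<^sub>L T j) + cscaleL (w powi j) (A1 o\<^sub>L T (j - 1))
              + - (if j = 0 then id_blinfun else 0) = cscaleL (w powi j) (B j)" for j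
      by (simp add: B_def cscaleL_add cscaleL_diff)
    ultimately show "((\<lambda>j. cscaleL (w powi j) (B j)) has_sum 0) UNIV" using h3 by simp
  qed
  then show ?thesis by (simp add: B_def)
qed

end



lemma geom_le_zero:
  fixes x C q :: real
  assumes "\<And>k. x \<le> C * q^k" "0 \<le> q" "q < 1"
  shows "x \<le> 0"
proof -
  have "(\<lambda>k. C * q^k) \<longlonglongrightarrow> C * 0" by (intro tendsto_mult tendsto_const LIMSEQ_power_zero) (use assms in auto)
  then show ?thesis using assms(1) by (intro LIMSEQ_le_const[of "\<lambda>k. C * q^k"]) auto
qed

context MT begin

lemma Tneg_bound:
  assumes "0 < \<delta>" "\<delta> < \<epsilon>"
  shows "\<exists>K. \<forall>m::nat. norm (T (- int m)) \<le> K * \<delta>^m"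
proof -
  obtain K where K: "\<And>j. norm (T j) * \<delta> powi j \<le> K" using coef_bound[OF assms] by blast
  have "norm (T (- int m)) \<le> K * \<delta>^m" for m
  proof -
    have e: "\<delta> powi (- int m) = 1 / \<delta>^m"
      using power_int_minus[of \<delta> "int m"] power_int_of_nat[of \<delta> m] by (simp only: divide_inverse mult_1)
    have "norm (T (- int m)) / \<delta>^m \<le> K" using K[of "- int m"] unfolding e by simp
    then show ?thesis using assms by (simp add: field_simps)
  qed
  then show ?thesis by blast
qed

lemma Tpos_bound:
  assumes "0 < \<rho>" "\<rho> < \<epsilon>"
  shows "\<exists>K. \<forall>k::nat. norm (T (int k)) * \<rho>^k \<le> K"
proof -
  obtain K where K: "\<And>j. norm (T j) * \<rho> powi j \<le> K" using coef_bound[OF assms] by blast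
  show ?thesis using K[of "int _"] by auto
qed

lemma T0C0Tneg:
  assumes m: "m \<ge> 1"
  shows "(T 0 o\<^sub>L C0) o\<^sub>L T (- int m) = 0"
proof -
  define a where "a k m = (T (int k) o\<^sub>L C0) o\<^sub>L T (- int m)" for k m
  have step: "a k m = a (Suc k) (Suc m)" if "m \<ge> 1" for k m
  proof -
    have II: "(C0 o\<^sub>L T (- int m)) + (A1 o\<^sub>L T (- int m - 1)) = 0"
      using ident_II[of "- int m"] that by simp
    have I: "(T (int k + 1) o\<^sub>L C0) + (T (int k) o\<^sub>L A1) = 0"
      using ident_I[of "int k + 1"] by simp
    have "a k m = T (int k) o\<^sub>L (C0 o\<^sub>L T (- int m))" by (simp add: a_def bc_assoc)
    also have "C0 o\<^sub>L T (- int m) = - (A1 o\<^sub>L T (- int m - 1))" using II by (simp add: eq_neg_iff_add_eq_0)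
    also have "T (int k) o\<^sub>L - (A1 o\<^sub>L T (- int m - 1)) = - ((T (int k) o\<^sub>L A1) o\<^sub>L T (- int m - 1))"
      by (simp add: bc_minus_right bc_assoc)
    also have "T (int k) o\<^sub>L A1 = - (T (int k + 1) o\<^sub>L C0)" using I by (simp add: eq_neg_iff_add_eq_0 add.commute)
    also have "- (- (T (int k + 1) o\<^sub>L C0) o\<^sub>L T (- int m - 1)) = a (Suc k) (Suc m)"
    proof -
      have e1: "int (Suc k) = int k + 1" and e2: "- int (Suc m) = - int m - 1" by simp_all
      show ?thesis unfolding a_def e1 e2 by (simp only: bc_minus_left minus_minus)
    qed
    finally show ?thesis .
  qed
  have shift: "a 0 m = a k (m + k)" for k
  proof (induction k)
    case (Suc k) then show ?case using step[of "m + k" k] m by simp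
  qed simp
  define \<rho> where "\<rho> = \<epsilon> / 2"
  define \<delta> where "\<delta> = \<epsilon> / 4"
  have rd: "0 < \<rho>" "\<rho> < \<epsilon>" "0 < \<delta>" "\<delta> < \<epsilon>" "\<delta> / \<rho> = 1/2" using eps_pos by (auto simp: \<rho>_def \<delta>_def)
  obtain K1 where K1: "\<And>k. norm (T (int k)) * \<rho>^k \<le> K1" using Tpos_bound[OF rd(1,2)] by blast
  obtain K2 where K2: "\<And>m. norm (T (- int m)) \<le> K2 * \<delta>^m" using Tneg_bound[OF rd(3,4)] by blast
  have K1p: "K1 \<ge> 0"
  proof -
    have "0 \<le> norm (T (int 0)) * \<rho>^0" by simp
    then show ?thesis using K1[of 0] by linarith
  qed
  have "norm (a 0 m) \<le> (K1 * norm C0 * K2 * \<delta>^m) * (1/2)^k" for k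
  proof -
    have "norm (a 0 m) = norm (a k (m + k))" using shift by simp
    also have "\<dots> \<le> norm (T (int k)) * norm C0 * norm (T (- int (m + k)))"
      unfolding a_def by (meson norm_blinfun_compose mult_right_mono norm_ge_zero order.trans)
    also have "\<dots> \<le> (K1 / \<rho>^k) * norm C0 * (K2 * \<delta>^(m + k))"
    proof (intro mult_mono)
      show "norm (T (int k)) \<le> K1 / \<rho>^k" using K1[of k] rd by (simp add: field_simps)
      show "norm (T (- int (m + k))) \<le> K2 * \<delta>^(m + k)" by (rule K2)
    qed (use K1p rd in auto)
    also have "\<dots> = (K1 * norm C0 * K2 * \<delta>^m) * (\<delta> / \<rho>)^k"
      using rd by (simp add: power_add power_divide field_simps)
    finally show ?thesis using rd by simp
  qed
  then have "norm (a 0 m) \<le> 0" by (intro geom_le_zero) auto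
  then show ?thesis by (simp add: a_def)
qed

lemma Tneg_rec:
  assumes k: "k \<ge> 1"
  shows "T (- int k - 1) = - (N o\<^sub>L T (- int k))"
proof -
  have II: "(C0 o\<^sub>L T (- int k)) + (A1 o\<^sub>L T (- int k - 1)) = 0"
    using ident_II[of "- int k"] k by simp
  have I0: "(T 0 o\<^sub>L C0) + (T (-1) o\<^sub>L A1) = id_blinfun" using ident_I[of 0] by simp
  have "N o\<^sub>L T (- int k) = T (-1) o\<^sub>L (C0 o\<^sub>L T (- int k))" by (simp add: bc_assoc)
  also have "C0 o\<^sub>L T (- int k) = - (A1 o\<^sub>L T (- int k - 1))" using II by (simp add: eq_neg_iff_add_eq_0)
  also have "T (-1) o\<^sub>L - (A1 o\<^sub>L T (- int k - 1)) = - ((T (-1) o\<^sub>L A1) o\<^sub>L T (- int k - 1))"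
    by (simp add: bc_minus_right bc_assoc)
  also have "T (-1) o\<^sub>L A1 = id_blinfun - (T 0 o\<^sub>L C0)" using I0 by (simp add: algebra_simps)
  also have "(id_blinfun - (T 0 o\<^sub>L C0)) o\<^sub>L T (- int k - 1) = T (- int k - 1)"
  proof -
    have "(T 0 o\<^sub>L C0) o\<^sub>L T (- int (Suc k)) = 0" by (rule T0C0Tneg) simp
    moreover have eq: "- int (Suc k) = - int k - 1" by simp
    ultimately have "(T 0 o\<^sub>L C0) o\<^sub>L T (- int k - 1) = 0" by (simp only: eq)
    then show ?thesis by (simp only: bc_diff_left bc_id1 diff_zero)
  qed
  finally show ?thesis by simp
qed

lemma Tneg_formula: "T (- int (Suc k)) = (-1)^k *\<^sub>R (opow N k o\<^sub>L T (-1))"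
proof (induction k)
  case 0 then show ?case by simp
next
  case (Suc k)
  have "T (- int (Suc (Suc k))) = T (- int (Suc k) - 1)" by simp
  also have "\<dots> = - (N o\<^sub>L T (- int (Suc k)))" by (rule Tneg_rec) simp
  also have "\<dots> = (-1)^(Suc k) *\<^sub>R (opow N (Suc k) o\<^sub>L T (-1))"
    unfolding Suc.IH by (simp add: bc_scaleR_right opow_Suc bc_assoc)
  finally show ?case .
qed

lemma Npow_bound:
  assumes "0 < \<delta>" "\<delta> < \<epsilon>"
  shows "\<exists>K. \<forall>k. norm (opow N k) \<le> K * \<delta>^k"
proof -
  obtain K2 where K2: "\<And>m. norm (T (- int m)) \<le> K2 * \<delta>^m" using Tneg_bound[OF assms] by blast
  have "norm (opow N k) \<le> max 1 (norm C0 * K2) * \<delta>^k" for k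
  proof (cases k)
    case 0 then show ?thesis using norm_blinfun_id_le[where 'a='x] by (simp add: le_max_iff_disj)
  next
    case (Suc k')
    have "opow N (Suc k') = (opow N k' o\<^sub>L T (-1)) o\<^sub>L C0" by (simp add: opow_Suc' bc_assoc)
    also have "opow N k' o\<^sub>L T (-1) = (-1)^k' *\<^sub>R T (- int (Suc k'))"
    proof -
      have "((-1::real)^k' * (-1)^k') = 1" by (simp flip: power_mult_distrib)
      then show ?thesis by (subst Tneg_formula) simp
    qed
    finally have "norm (opow N (Suc k')) = norm (((-1)^k' *\<^sub>R T (- int (Suc k'))) o\<^sub>L C0)" by simp
    also have "\<dots> \<le> norm ((-1::real)^k' *\<^sub>R T (- int (Suc k'))) * norm C0" by (rule norm_blinfun_compose)
    also have "norm ((-1::real)^k' *\<^sub>R T (- int (Suc k'))) = norm (T (- int (Suc k')))"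
      by (simp add: power_abs)
    finally have "norm (opow N (Suc k')) \<le> norm (T (- int (Suc k'))) * norm C0" .
    also have "\<dots> \<le> (K2 * \<delta>^(Suc k')) * norm C0" by (intro mult_right_mono K2) auto
    also have "\<dots> \<le> max 1 (norm C0 * K2) * \<delta>^(Suc k')"
      using assms by (simp add: algebra_simps mult_right_mono)
    finally show ?thesis using Suc by simp
  qed
  then show ?thesis by blast
qed

end



lemma cscaleL_minus_one: "cscaleL (-1) T = - T"
proof -
  have "cscaleL (-1) T = cscaleL (complex_of_real (-1)) T" by simp
  also have "\<dots> = - T" by (simp only: cscaleL_of_real) simp
  finally show ?thesis .
qed

lemma cscaleL_real_pow: "cscaleL ((-1)^n * a) T = cscaleL a ((-1::real)^n *\<^sub>R T)"
proof -
  have "cscaleL ((-1)^n * a) T = cscaleL a (cscaleL (complex_of_real ((-1)^n)) T)"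
    by (simp add: cscaleL_mult mult.commute)
  then show ?thesis by (simp only: cscaleL_of_real)
qed

context MT begin

definition Lw :: "complex \<Rightarrow> ('x \<Rightarrow>\<^sub>L 'x)" where "Lw w = cscaleL w id_blinfun + N"
definition Inv :: "complex \<Rightarrow> ('x \<Rightarrow>\<^sub>L 'x)" where
  "Inv w = cscaleL (1/w) (\<Sum>n. cscaleL ((-1/w)^n) (opow N n))"

lemma Lw_lin: "clinear_op (Lw w)"
  unfolding Lw_def by (intro clinear_add clinear_cscaleL N_lin clinear_id)

lemma Inv_series:
  assumes w: "w \<noteq> 0"
  shows "(\<lambda>n. cscaleL ((-1/w)^n) (opow N n)) sums (\<Sum>n. cscaleL ((-1/w)^n) (opow N n))"
    and "(id_blinfun - cscaleL (-1/w) N) o\<^sub>L (\<Sum>n. cscaleL ((-1/w)^n) (opow N n)) = id_blinfun"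
    and "(\<Sum>n. cscaleL ((-1/w)^n) (opow N n)) o\<^sub>L (id_blinfun - cscaleL (-1/w) N) = id_blinfun"
proof -
  define \<delta> where "\<delta> = min (cmod w) \<epsilon> / 2"
  have d: "0 < \<delta>" "\<delta> < \<epsilon>" "\<delta> / cmod w \<le> 1/2" using w eps_pos by (auto simp: \<delta>_def field_simps)
  obtain K where K: "\<And>k. norm (opow N k) \<le> K * \<delta>^k" using Npow_bound[OF d(1,2)] by blast
  have sm: "summable (\<lambda>n. cmod (-1/w) ^ n * norm (opow N n))"
  proof (rule summable_comparison_test'[where N=0])
    have "norm (\<delta> / cmod w) = \<delta> / cmod w" using d(1) by simp
    then have q: "norm (\<delta> / cmod w) < 1" using d(3) by linarith
    show "summable (\<lambda>n. K * (\<delta> / cmod w)^n)" by (intro summable_mult summable_geometric q)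
    fix n :: nat
    have "norm (cmod (-1/w) ^ n * norm (opow N n)) = (1 / cmod w)^n * norm (opow N n)"
      by (simp add: norm_divide)
    also have "\<dots> \<le> (1 / cmod w)^n * (K * \<delta>^n)" using K by (intro mult_left_mono) auto
    also have "\<dots> = K * (\<delta> / cmod w)^n" by (simp add: power_divide)
    finally show "norm (cmod (-1/w) ^ n * norm (opow N n)) \<le> K * (\<delta> / cmod w)^n" .
  qed
  note nm = neumann[OF N_lin sm]
  show "(\<lambda>n. cscaleL ((-1/w)^n) (opow N n)) sums (\<Sum>n. cscaleL ((-1/w)^n) (opow N n))" by (rule nm(1))
  show "(id_blinfun - cscaleL (-1/w) N) o\<^sub>L (\<Sum>n. cscaleL ((-1/w)^n) (opow N n)) = id_blinfun" by (rule nm(2))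
  show "(\<Sum>n. cscaleL ((-1/w)^n) (opow N n)) o\<^sub>L (id_blinfun - cscaleL (-1/w) N) = id_blinfun" by (rule nm(3))
qed

lemma Inv_inverse:
  assumes w: "w \<noteq> 0"
  shows "Lw w o\<^sub>L Inv w = id_blinfun" "Inv w o\<^sub>L Lw w = id_blinfun"
proof -
  define M where "M = (\<Sum>n. cscaleL ((-1/w)^n) (opow N n))"
  define P where "P = id_blinfun - cscaleL (-1/w) N"
  have PM: "P o\<^sub>L M = id_blinfun" "M o\<^sub>L P = id_blinfun" using Inv_series[OF w] unfolding M_def P_def by auto
  have Pl: "clinear_op P" unfolding P_def by (intro clinear_diff clinear_id clinear_cscaleL N_lin)
  have LP: "Lw w = cscaleL w P"
  proof -
    have "cscaleL w P = cscaleL w id_blinfun - cscaleL (w * (-1/w)) N"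
      by (simp add: P_def cscaleL_diff cscaleL_mult)
    also have "w * (-1/w) = -1" using w by simp
    finally show ?thesis by (simp add: Lw_def cscaleL_minus_one)
  qed
  have IM: "Inv w = cscaleL (1/w) M" by (simp add: Inv_def M_def)
  show "Lw w o\<^sub>L Inv w = id_blinfun"
    unfolding LP IM cscaleL_compose_both[OF Pl] PM using w by simp
  have "M o\<^sub>L cscaleL w P = M o\<^sub>L (P o\<^sub>L cscaleL w id_blinfun)"
    by (simp add: cscaleL_compose_right[OF Pl])
  also have "\<dots> = cscaleL w id_blinfun" by (simp add: bc_assoc[symmetric] PM)
  finally show "Inv w o\<^sub>L Lw w = id_blinfun"
    unfolding LP IM cscaleL_compose_left using w by (simp add: cscaleL_mult)
qed

lemma Inv_lin: "w \<noteq> 0 \<Longrightarrow> clinear_op (Inv w)"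
  using clinear_inverse[OF Lw_lin Inv_inverse(2) Inv_inverse(1)] by blast

lemma S_laurent:
  assumes w: "w \<noteq> 0"
  shows "(\<lambda>n. cscaleL (w powi (- int (Suc n))) (T (- int (Suc n)))) sums (Inv w o\<^sub>L T (-1))"
proof -
  define M where "M = (\<Sum>n. cscaleL ((-1/w)^n) (opow N n))"
  have s: "(\<lambda>n. cscaleL ((-1/w)^n) (opow N n)) sums M" using Inv_series[OF w] unfolding M_def by auto
  have "(\<lambda>n. cscaleL (1/w) (cscaleL ((-1/w)^n) (opow N n) o\<^sub>L T (-1))) sums cscaleL (1/w) (M o\<^sub>L T (-1))"
    by (intro bounded_linear.sums[OF cscaleL_bl] bounded_linear.sums[OF bl_compL s])
  moreover have "cscaleL (1/w) (M o\<^sub>L T (-1)) = Inv w o\<^sub>L T (-1)"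
    by (simp add: Inv_def M_def cscaleL_compose_left)
  moreover have "cscaleL (1/w) (cscaleL ((-1/w)^n) (opow N n) o\<^sub>L T (-1))
      = cscaleL (w powi (- int (Suc n))) (T (- int (Suc n)))" for n
  proof -
    have e1: "w powi (- int (Suc n)) = 1 / w ^ Suc n"
      using power_int_minus[of w "int (Suc n)"] power_int_of_nat[of w "Suc n"] by (simp only: divide_inverse mult_1)
    have e: "(1/w) * (-1/w)^n = (-1)^n * w powi (- int (Suc n))"
    proof -
      have "(-1/w)^n = (-1)^n / w^n" by (rule power_divide)
      then show ?thesis unfolding e1 using w by (simp add: field_simps)
    qed
    show ?thesis
      unfolding Tneg_formula cscaleL_compose_left cscaleL_mult e cscaleL_real_pow ..
  qed
  ultimately show ?thesis by simp
qed

lemma Inv_expand: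
  assumes w0: "w0 \<noteq> 0" and ww: "cmod (w - w0) < min (cmod w0) (1 / (norm (Inv w0) + 1))"
  shows "(\<lambda>n. cscaleL ((w - w0)^n) ((-1::real)^n *\<^sub>R (opow (Inv w0) n o\<^sub>L Inv w0))) sums Inv w"
proof -
  define E0 where "E0 = Inv w0"
  define c where "c = w0 - w"
  have E0l: "clinear_op E0" unfolding E0_def by (rule Inv_lin[OF w0])
  have wne: "w \<noteq> 0" using ww by auto
  have cE: "cmod c * norm E0 < 1"
  proof -
    have "cmod c < 1 / (norm E0 + 1)" using ww by (simp add: c_def E0_def norm_minus_commute)
    moreover have pos: "0 < norm E0 + 1" by (simp add: add_nonneg_pos)
    ultimately have "cmod c * (norm E0 + 1) < 1" using pos_less_divide_eq[OF pos, of "cmod c" 1] by blast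
    moreover have "cmod c * norm E0 \<le> cmod c * (norm E0 + 1)" by (intro mult_left_mono) auto
    ultimately show ?thesis by linarith
  qed
  have sm: "summable (\<lambda>n. cmod c ^ n * norm (opow E0 n))"
  proof (rule summable_comparison_test'[where N=0])
    show "summable (\<lambda>n. (cmod c * norm E0)^n)" using cE by (intro summable_geometric) auto
    show "norm (cmod c ^ n * norm (opow E0 n)) \<le> (cmod c * norm E0)^n" for n
      by (simp add: power_mult_distrib mult_left_mono norm_opow)
  qed
  note nm = neumann[OF E0l sm]
  define M where "M = (\<Sum>n. cscaleL (c^n) (opow E0 n))"
  have LE: "Lw w0 o\<^sub>L E0 = id_blinfun" using Inv_inverse(1)[OF w0] by (simp add: E0_def)
  have Lww: "Lw w = Lw w0 o\<^sub>L (id_blinfun - cscaleL c E0)"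
  proof -
    have "Lw w0 o\<^sub>L (id_blinfun - cscaleL c E0) = Lw w0 - cscaleL c id_blinfun"
      by (simp add: bc_diff_right cscaleL_compose_right[OF Lw_lin] LE)
    also have "\<dots> = Lw w"
    proof -
      have eq: "cscaleL w0 id_blinfun = cscaleL c id_blinfun + cscaleL w id_blinfun"
        by (simp add: c_def flip: cscaleL_add_left)
      show ?thesis unfolding Lw_def eq by (simp add: algebra_simps)
    qed
    finally show ?thesis by simp
  qed
  have "Lw w o\<^sub>L (M o\<^sub>L E0) = id_blinfun"
  proof -
    have "Lw w o\<^sub>L (M o\<^sub>L E0) = Lw w0 o\<^sub>L (((id_blinfun - cscaleL c E0) o\<^sub>L M) o\<^sub>L E0)"
      by (simp add: Lww bc_assoc)
    also have "\<dots> = id_blinfun" using nm(2) LE unfolding M_def by simp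
    finally show ?thesis .
  qed
  then have IW: "Inv w = M o\<^sub>L E0" using left_inv_unique[OF Inv_inverse(2)[OF wne]] by blast
  have "(\<lambda>n. cscaleL (c^n) (opow E0 n) o\<^sub>L E0) sums (M o\<^sub>L E0)"
    using bounded_linear.sums[OF bl_compL nm(1)] unfolding M_def .
  moreover have "cscaleL (c^n) (opow E0 n) o\<^sub>L E0 = cscaleL ((w - w0)^n) ((-1::real)^n *\<^sub>R (opow E0 n o\<^sub>L E0))" for n
  proof -
    have "c^n = (-1)^n * (w - w0)^n" by (simp add: c_def flip: power_mult_distrib)
    then show ?thesis unfolding cscaleL_compose_left by (simp only: cscaleL_real_pow)
  qed
  ultimately show ?thesis unfolding IW E0_def by simp
qed

end



context MT begin

definition "D = {z. cmod z < 1 + \<epsilon> \<and> z \<noteq> 1}"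
definition "Sfun z = Inv (z - 1) o\<^sub>L T (-1)"
definition "Kop = id_blinfun - (T (-1) o\<^sub>L (A0 + A1))"
definition "Qc s = (-1::real) ^ s *\<^sub>R (opow (op_inv A0 o\<^sub>L A1) s o\<^sub>L op_inv A0)
                     + (opow (op_inv Kop) (s + 1) o\<^sub>L T (-1))"
definition "g z = (\<Sum>s. cscaleL (z^s) (Qc s))"

lemma Qc_bound: "norm (Qc s) \<le> c / (1 + \<epsilon>) ^ s"
  using Q_bound unfolding Qc_def Kop_def by blast

lemma Qsum:
  assumes "0 \<le> t" "t < 1 + \<epsilon>"
  shows "summable (\<lambda>s. norm (Qc s) * t^s)"
proof (rule geom_summable[of Qc "1 + \<epsilon>" c t])
  fix n
  have p: "0 < (1 + \<epsilon>) ^ n" using eps_pos by simp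
  show "norm (Qc n) * (1 + \<epsilon>) ^ n \<le> c" using Qc_bound[of n] unfolding pos_le_divide_eq[OF p] .
qed (use assms in auto)

lemma g_sums:
  assumes "cmod z < 1 + \<epsilon>"
  shows "(\<lambda>s. cscaleL (z^s) (Qc s)) sums g z"
proof -
  have "summable (\<lambda>s. norm (cscaleL (z^s) (Qc s)))"
    using Qsum[of "cmod z"] assms by (simp add: norm_cscaleL norm_power mult.commute)
  then show ?thesis unfolding g_def by (rule summable_sums[OF summable_norm_cancel])
qed

lemma g_analytic: "op_analytic_on D g"
  unfolding op_analytic_on_def
proof
  fix z0 assume z0: "z0 \<in> D"
  define r where "r = 1 + \<epsilon> - cmod z0"
  have r: "r > 0" using z0 by (simp add: D_def r_def)
  define a where "a l = (\<Sum>r. cscaleL (of_nat ((l + r) choose l) * z0^r) (Qc (l + r)))" for l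
  have "(\<lambda>n. cscaleL ((w - z0) ^ n) (a n)) sums g w" if w: "w \<in> ball z0 r" for w
  proof -
    define t where "t = (cmod z0 + cmod (w - z0) + 1 + \<epsilon>) / 2"
    have wr: "cmod (w - z0) < r" using w by (simp add: dist_norm norm_minus_commute)
    have t: "cmod z0 + cmod (w - z0) < t" "t < 1 + \<epsilon>" "0 \<le> t"
      using wr eps_pos norm_ge_zero[of z0] norm_ge_zero[of "w - z0"] by (auto simp: t_def r_def)
    have "(\<lambda>l. cscaleL ((w - z0)^l) (a l)) sums (\<Sum>s. cscaleL ((z0 + (w - z0))^s) (Qc s))"
      unfolding a_def by (rule reexpand[OF Qsum[OF t(3) t(2)] t(1)])
    then show ?thesis by (simp add: g_def)
  qed
  then show "\<exists>r>0. \<exists>a. \<forall>w\<in>ball z0 r. (\<lambda>n. cscaleL ((w - z0) ^ n) (a n)) sums g w"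
    using r by blast
qed

lemma S_analytic: "op_analytic_on D Sfun"
  unfolding op_analytic_on_def
proof
  fix z0 assume z0: "z0 \<in> D"
  define w0 where "w0 = z0 - 1"
  have w0: "w0 \<noteq> 0" using z0 by (simp add: D_def w0_def)
  define r where "r = min (cmod w0) (1 / (norm (Inv w0) + 1))"
  have r: "r > 0" using w0 by (simp add: r_def add_nonneg_pos)
  define a where "a n = ((-1::real)^n *\<^sub>R (opow (Inv w0) n o\<^sub>L Inv w0)) o\<^sub>L T (-1)" for n
  have "(\<lambda>n. cscaleL ((z - z0) ^ n) (a n)) sums Sfun z" if z: "z \<in> ball z0 r" for z
  proof -
    have "cmod ((z - 1) - w0) < r" using z by (simp add: dist_norm norm_minus_commute w0_def)
    then have "(\<lambda>n. cscaleL (((z - 1) - w0)^n) ((-1::real)^n *\<^sub>R (opow (Inv w0) n o\<^sub>L Inv w0))) sums Inv (z - 1)"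
      unfolding r_def by (rule Inv_expand[OF w0])
    from bounded_linear.sums[OF bl_compL this, of "T (-1)"]
    show ?thesis by (simp add: Sfun_def a_def w0_def cscaleL_compose_left)
  qed
  then show "\<exists>r>0. \<exists>a. \<forall>w\<in>ball z0 r. (\<lambda>n. cscaleL ((w - z0) ^ n) (a n)) sums Sfun w"
    using r by blast
qed

lemma A0inv: "op_inv A0 = R 0" "R 0 o\<^sub>L A0 = id_blinfun" "A0 o\<^sub>L R 0 = id_blinfun"
proof -
  have "R 0 o\<^sub>L (A0 + cscaleL 0 A1) = id_blinfun \<and> (A0 + cscaleL 0 A1) o\<^sub>L R 0 = id_blinfun"
    using R_inv[rule_format, of 0] eps_pos by simp
  then show "R 0 o\<^sub>L A0 = id_blinfun" "A0 o\<^sub>L R 0 = id_blinfun" by auto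
  then show "op_inv A0 = R 0" by (rule op_inv_eq)
qed

lemma R_near0:
  assumes z: "cmod z < min 1 (1 / (norm (op_inv A0 o\<^sub>L A1) + 1))"
  shows "(\<lambda>n. cscaleL (z^n) ((-1::real)^n *\<^sub>R (opow (op_inv A0 o\<^sub>L A1) n o\<^sub>L op_inv A0))) sums R z"
proof -
  define E where "E = op_inv A0 o\<^sub>L A1"
  define A0i where "A0i = op_inv A0"
  have A0i: "A0i o\<^sub>L A0 = id_blinfun" "A0 o\<^sub>L A0i = id_blinfun" using A0inv by (auto simp: A0i_def)
  have A0il: "clinear_op A0i" using clinear_inverse[OF A0_lin A0i] .
  have El: "clinear_op E" unfolding E_def A0i_def[symmetric] by (intro clinear_compose A0il A1_lin)
  define c where "c = - z"
  have cE: "cmod c * norm E < 1"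
  proof -
    have "cmod c < 1 / (norm E + 1)" using z by (simp add: c_def E_def)
    moreover have pos: "0 < norm E + 1" by (simp add: add_nonneg_pos)
    ultimately have "cmod c * (norm E + 1) < 1" using pos_less_divide_eq[OF pos, of "cmod c" 1] by blast
    moreover have "cmod c * norm E \<le> cmod c * (norm E + 1)" by (intro mult_left_mono) auto
    ultimately show ?thesis by linarith
  qed
  have sm: "summable (\<lambda>n. cmod c ^ n * norm (opow E n))"
  proof (rule summable_comparison_test'[where N=0])
    show "summable (\<lambda>n. (cmod c * norm E)^n)" using cE by (intro summable_geometric) auto
    show "norm (cmod c ^ n * norm (opow E n)) \<le> (cmod c * norm E)^n" for n
      by (simp add: power_mult_distrib mult_left_mono norm_opow)
  qed
  note nm = neumann[OF El sm]
  define M where "M = (\<Sum>n. cscaleL (c^n) (opow E n))"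
  have Az0: "A0 + cscaleL z A1 = A0 o\<^sub>L (id_blinfun - cscaleL c E)"
  proof -
    have "A0 o\<^sub>L cscaleL c E = cscaleL c A1"
      by (simp add: cscaleL_compose_right[OF A0_lin] E_def A0i_def[symmetric] bc_assoc[symmetric] A0i)
    moreover have "cscaleL c A1 = - cscaleL z A1"
    proof -
      have "cscaleL c A1 + cscaleL z A1 = 0" by (simp add: c_def flip: cscaleL_add_left)
      then show ?thesis by (simp add: eq_neg_iff_add_eq_0)
    qed
    ultimately show ?thesis by (simp add: bc_diff_right)
  qed
  have zD: "cmod z < 1 + \<epsilon>" "z \<noteq> 1" using z eps_pos by auto
  have Rz: "R z o\<^sub>L (A0 + cscaleL z A1) = id_blinfun" using R_inv zD by blast
  have "(A0 + cscaleL z A1) o\<^sub>L (M o\<^sub>L A0i) = id_blinfun"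
  proof -
    have "(A0 + cscaleL z A1) o\<^sub>L (M o\<^sub>L A0i) = A0 o\<^sub>L (((id_blinfun - cscaleL c E) o\<^sub>L M) o\<^sub>L A0i)"
      by (simp add: Az0 bc_assoc)
    also have "\<dots> = id_blinfun" using nm(2) A0i unfolding M_def by simp
    finally show ?thesis .
  qed
  then have RX: "R z = M o\<^sub>L A0i" using left_inv_unique[OF Rz] by blast
  have "(\<lambda>n. cscaleL (c^n) (opow E n) o\<^sub>L A0i) sums (M o\<^sub>L A0i)"
    using bounded_linear.sums[OF bl_compL nm(1)] unfolding M_def .
  moreover have "cscaleL (c^n) (opow E n) o\<^sub>L A0i = cscaleL (z^n) ((-1::real)^n *\<^sub>R (opow E n o\<^sub>L A0i))" for n
  proof -
    have "c^n = (-1)^n * z^n" by (simp add: c_def flip: power_mult_distrib)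
    then show ?thesis unfolding cscaleL_compose_left by (simp only: cscaleL_real_pow)
  qed
  ultimately show ?thesis unfolding RX E_def A0i_def by simp
qed

lemma opinv_K: "op_inv Kop = - Inv (-1)"
proof -
  have L: "Lw (-1) = - Kop"
    by (simp add: Lw_def Kop_def cscaleL_minus_one)
  have "(- Inv (-1)) o\<^sub>L Kop = id_blinfun"
    using Inv_inverse(2)[of "-1"] unfolding L by (simp add: bc_minus_left bc_minus_right)
  moreover have "Kop o\<^sub>L (- Inv (-1)) = id_blinfun"
    using Inv_inverse(1)[of "-1"] unfolding L by (simp add: bc_minus_left bc_minus_right)
  ultimately show ?thesis by (rule op_inv_eq)
qed

lemma S_near0:
  assumes z: "cmod z < min 1 (1 / (norm (Inv (-1)) + 1))"
  shows "(\<lambda>n. cscaleL (z^n) (- (opow (op_inv Kop) (n + 1) o\<^sub>L T (-1)))) sums Sfun z"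
proof -
  have w0m: "(-1::complex) \<noteq> 0" by simp
  have "cmod ((z - 1) - (-1)) < min (cmod (-1::complex)) (1 / (norm (Inv (-1)) + 1))" using z by simp
  then have "(\<lambda>n. cscaleL (((z - 1) - (-1))^n) ((-1::real)^n *\<^sub>R (opow (Inv (-1)) n o\<^sub>L Inv (-1)))) sums Inv (z - 1)"
    by (rule Inv_expand[OF w0m])
  from bounded_linear.sums[OF bl_compL this, of "T (-1)"]
  have "(\<lambda>n. cscaleL (z^n) (((-1::real)^n *\<^sub>R (opow (Inv (-1)) n o\<^sub>L Inv (-1))) o\<^sub>L T (-1))) sums Sfun z"
    by (simp add: Sfun_def cscaleL_compose_left)
  moreover have "((-1::real)^n *\<^sub>R (opow (Inv (-1)) n o\<^sub>L Inv (-1))) o\<^sub>L T (-1) = - (opow (op_inv Kop) (n + 1) o\<^sub>L T (-1))" for n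
    unfolding opinv_K opow_uminus by (simp add: opow_Suc' bc_scaleR_left bc_minus_left)
  ultimately show ?thesis by simp
qed

end



lemma analytic_diff:
  assumes "op_analytic_on S f" "op_analytic_on S g"
  shows "op_analytic_on S (\<lambda>z. f z - g z)"
  unfolding op_analytic_on_def
proof
  fix z assume z: "z \<in> S"
  obtain r1 a1 where 1: "r1 > 0" "\<forall>w\<in>ball z r1. (\<lambda>n. cscaleL ((w - z) ^ n) (a1 n)) sums f w"
    using assms(1) z unfolding op_analytic_on_def by blast
  obtain r2 a2 where 2: "r2 > 0" "\<forall>w\<in>ball z r2. (\<lambda>n. cscaleL ((w - z) ^ n) (a2 n)) sums g w"
    using assms(2) z unfolding op_analytic_on_def by blast
  have "\<forall>w\<in>ball z (min r1 r2). (\<lambda>n. cscaleL ((w - z) ^ n) (a1 n - a2 n)) sums (f w - g w)"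
  proof
    fix w assume "w \<in> ball z (min r1 r2)"
    then have "(\<lambda>n. cscaleL ((w - z) ^ n) (a1 n) - cscaleL ((w - z) ^ n) (a2 n)) sums (f w - g w)"
      using 1 2 by (intro sums_diff) auto
    then show "(\<lambda>n. cscaleL ((w - z) ^ n) (a1 n - a2 n)) sums (f w - g w)" by (simp add: cscaleL_diff)
  qed
  then show "\<exists>r>0. \<exists>a. \<forall>w\<in>ball z r. (\<lambda>n. cscaleL ((w - z) ^ n) (a n)) sums (f w - g w)"
    using 1 2 by (intro exI[of _ "min r1 r2"]) auto
qed

lemma int_has_sum_split:
  fixes f :: "int \<Rightarrow> 'a::banach"
  assumes "(f has_sum s) UNIV"
  shows "\<exists>P M. (\<lambda>n. f (int n)) sums P \<and> (\<lambda>n. f (- int (Suc n))) sums M \<and> s = P + M"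
proof -
  define A where "A = range int"
  define B where "B = range (\<lambda>n. - int (Suc n))"
  have sf: "f summable_on UNIV" using assms by (auto simp: summable_on_def)
  have sA: "f summable_on A" using sf by (rule summable_on_subset_banach) simp
  have sB: "f summable_on B" using sf by (rule summable_on_subset_banach) simp
  have AB: "A \<inter> B = {}" "A \<union> B = UNIV"
  proof -
    show "A \<inter> B = {}" by (auto simp: A_def B_def)
    have "j \<in> A \<union> B" for j
    proof (cases "j \<ge> 0")
      case True then show ?thesis by (auto simp: A_def intro: image_eqI[of _ _ "nat j"])
    next
      case False then show ?thesis by (auto simp: B_def intro!: image_eqI[of _ _ "nat (-j - 1)"])
    qed
    then show "A \<union> B = UNIV" by blast
  qed
  have "((\<lambda>n. f (int n)) has_sum infsum f A) UNIV"
    using has_sum_infsum[OF sA] unfolding A_def by (subst (asm) has_sum_reindex) (auto simp: inj_on_def o_def)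
  then have P: "(\<lambda>n. f (int n)) sums infsum f A" by (rule has_sum_imp_sums)
  have "((\<lambda>n. f (- int (Suc n))) has_sum infsum f B) UNIV"
    using has_sum_infsum[OF sB] unfolding B_def by (subst (asm) has_sum_reindex) (auto simp: inj_on_def o_def)
  then have M: "(\<lambda>n. f (- int (Suc n))) sums infsum f B" by (rule has_sum_imp_sums)
  have "s = infsum f UNIV" using assms by (simp add: infsumI)
  also have "\<dots> = infsum f A + infsum f B" using infsum_Un_disjoint[OF sA sB AB(1)] AB(2) by simp
  finally show ?thesis using P M by blast
qed

context MT begin

lemma D_eq: "D = ball 0 (1 + \<epsilon>) - {1}"
  by (auto simp: D_def)

lemma D_open: "open D" unfolding D_eq by (intro open_Diff open_ball closed_singleton)

lemma D_conn: "connected D"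
  unfolding D_eq using eps_pos by (intro connected_punctured_convex convex_ball) (simp add: aff_dim_open)

lemma h_zero: "z \<in> D \<Longrightarrow> R z - Sfun z - g z = 0"
proof -
  define r0 where "r0 = min (min 1 (1 / (norm (op_inv A0 o\<^sub>L A1) + 1))) (1 / (norm (Inv (-1)) + 1))"
  have r0: "r0 > 0" by (simp add: r0_def add_nonneg_pos)
  have an: "op_analytic_on D (\<lambda>z. R z - Sfun z - g z)"
    by (intro analytic_diff R_analytic[folded D_def] S_analytic g_analytic)
  have z0: "0 \<in> D" using eps_pos by (simp add: D_def)
  have "\<forall>w\<in>ball 0 r0. R w - Sfun w - g w = 0"
  proof
    fix w :: complex assume "w \<in> ball 0 r0"
    then have w: "cmod w < r0" by simp
    have s1: "(\<lambda>n. cscaleL (w^n) ((-1::real)^n *\<^sub>R (opow (op_inv A0 o\<^sub>L A1) n o\<^sub>L op_inv A0))) sums R w"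
      by (rule R_near0) (use w in \<open>simp add: r0_def\<close>)
    have s2: "(\<lambda>n. cscaleL (w^n) (- (opow (op_inv Kop) (n + 1) o\<^sub>L T (-1)))) sums Sfun w"
      by (rule S_near0) (use w in \<open>simp add: r0_def\<close>)
    have s3: "(\<lambda>n. cscaleL (w^n) (Qc n)) sums g w"
      by (rule g_sums) (use w eps_pos in \<open>simp add: r0_def\<close>)
    have "(\<lambda>n. cscaleL (w^n) ((-1::real)^n *\<^sub>R (opow (op_inv A0 o\<^sub>L A1) n o\<^sub>L op_inv A0))
             - cscaleL (w^n) (- (opow (op_inv Kop) (n + 1) o\<^sub>L T (-1))) - cscaleL (w^n) (Qc n)) sums (R w - Sfun w - g w)"
      by (intro sums_diff s1 s2 s3)
    moreover have "cscaleL (w^n) ((-1::real)^n *\<^sub>R (opow (op_inv A0 o\<^sub>L A1) n o\<^sub>L op_inv A0))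
             - cscaleL (w^n) (- (opow (op_inv Kop) (n + 1) o\<^sub>L T (-1))) - cscaleL (w^n) (Qc n) = 0" for n
      by (simp add: Qc_def cscaleL_add cscaleL_minus)
    ultimately show "R w - Sfun w - g w = 0" by (simp add: sums_iff)
  qed
  then have "\<exists>r>0. \<forall>w\<in>ball 0 r. R w - Sfun w - g w = 0" using r0 by blast
  from identity_thm[OF D_open D_conn an z0 this]
  show "z \<in> D \<Longrightarrow> R z - Sfun z - g z = 0" by blast
qed

lemma T_eq: "T (int l) = (\<Sum>r. real ((l + r) choose l) *\<^sub>R Qc (l + r))"
proof -
  define b where "b l = (\<Sum>r. cscaleL (of_nat ((l + r) choose l) * 1^r) (Qc (l + r)))" for l
  have ser: "(\<lambda>n. cscaleL ((w - 0)^n) (T (int n) - b n)) sums 0"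
    if w: "0 < cmod (w - 0)" "cmod (w - 0) < \<epsilon>" for w
  proof -
    define z where "z = 1 + w"
    have wz: "z - 1 = w" by (simp add: z_def)
    have zD: "z \<in> D" using w norm_triangle_ineq[of 1 w] by (auto simp: D_def z_def)
    have L: "((\<lambda>j. cscaleL (w powi j) (T j)) has_sum R z) UNIV"
      using Laurent[rule_format, of z] w by (simp add: wz)
    obtain P M where PM: "(\<lambda>n. cscaleL (w powi (int n)) (T (int n))) sums P"
        "(\<lambda>n. cscaleL (w powi (- int (Suc n))) (T (- int (Suc n)))) sums M" "R z = P + M"
      using int_has_sum_split[OF L] by blast
    have "M = Sfun z" using sums_unique2[OF PM(2) S_laurent] w by (simp add: Sfun_def wz)
    moreover have "R z = Sfun z + g z" using h_zero[OF zD] by (simp add: algebra_simps)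
    ultimately have Pg: "P = g z" using PM(3) by simp
    define t where "t = (1 + cmod w + 1 + \<epsilon>) / 2"
    have t: "cmod 1 + cmod w < t" "t < 1 + \<epsilon>" "0 \<le> t" using w eps_pos by (auto simp: t_def)
    have "(\<lambda>l. cscaleL (w^l) (b l)) sums (\<Sum>s. cscaleL ((1 + w)^s) (Qc s))"
      unfolding b_def by (rule reexpand[OF Qsum[OF t(3) t(2)] t(1)])
    then have B: "(\<lambda>l. cscaleL (w^l) (b l)) sums g z" by (simp add: g_def z_def)
    have "(\<lambda>n. cscaleL (w^n) (T (int n)) - cscaleL (w^n) (b n)) sums (P - g z)"
      using sums_diff[OF PM(1) B] by simp
    then show ?thesis using Pg by (simp add: cscaleL_diff)
  qed
  have acc: "\<exists>w. 0 < cmod (w - 0) \<and> cmod (w - 0) < \<delta> \<and> (\<lambda>_. 0::'y \<Rightarrow>\<^sub>L 'x) w = 0" if "\<delta> > 0" for \<delta>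
    using that eps_pos by (intro exI[of _ "complex_of_real (min \<delta> \<epsilon> / 2)"]) auto
  have "T (int l) - b l = 0"
    by (rule ps_zero_acc[of \<epsilon> 0 "\<lambda>n. T (int n) - b n" "\<lambda>_. 0"]) (use eps_pos ser acc in auto)
  moreover have "b l = (\<Sum>r. real ((l + r) choose l) *\<^sub>R Qc (l + r))"
  proof -
    have "cscaleL (of_nat ((l + r) choose l) * 1^r) (Qc (l + r)) = real ((l + r) choose l) *\<^sub>R Qc (l + r)" for r
      using cscaleL_of_real[of "real ((l + r) choose l)" "Qc (l + r)"] by simp
    then show ?thesis by (simp add: b_def)
  qed
  ultimately show ?thesis by simp
qed

end



lemma binom_series:
  fixes q :: real
  assumes q: "0 \<le> q" "q < 1"
  shows "(\<lambda>r. real ((l + r) choose l) * q^r) sums (1 / (1 - q)^(l+1))"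
proof -
  have "\<bar>-q\<bar> < 1" using q by simp
  from gen_binomial_real[OF this, of "- (real l + 1)"]
  have s: "(\<lambda>n. ((- (real l + 1)) gchoose n) * (-q)^n) sums (1 + - q) powr (- (real l + 1))" .
  have t: "((- (real l + 1)) gchoose n) * (-q)^n = real ((l + n) choose l) * q^n" for n
  proof -
    have "(- (real l + 1)) gchoose n = (-1)^n * ((real l + 1 + of_nat n - 1) gchoose n)"
      by (rule gbinomial_minus)
    also have "(real l + 1 + of_nat n - 1) = real (l + n)" by simp
    also have "real (l + n) gchoose n = real ((l + n) choose n)" by (simp add: binomial_gbinomial)
    also have "(l + n) choose n = (l + n) choose l" using binomial_symmetric[of n "l + n"] by simp
    finally have "(- (real l + 1)) gchoose n = (-1)^n * real ((l + n) choose l)" .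
    moreover have "(-1::real)^n * (-q)^n = q^n" by (simp flip: power_mult_distrib)
    ultimately show ?thesis by (metis mult.assoc mult.commute)
  qed
  have p: "(1 + - q) powr (- (real l + 1)) = 1 / (1 - q)^(l+1)"
  proof -
    have "(1 + - q) powr (- (real l + 1)) = (1 - q) powr (- real (l+1))" by (simp add: algebra_simps)
    also have "\<dots> = inverse ((1 - q) powr real (l+1))" by (rule powr_minus)
    also have "(1 - q) powr real (l+1) = (1 - q)^(l+1)" by (rule powr_realpow) (use q in simp)
    finally show ?thesis by (simp add: inverse_eq_divide)
  qed
  show ?thesis using s unfolding t p .
qed

theorem mainTheorem10:
  fixes A0 A1 :: "'x::complex_banach \<Rightarrow>\<^sub>L 'y::complex_banach"
    and R :: "complex \<Rightarrow> ('y \<Rightarrow>\<^sub>L 'x)"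
    and T :: "int \<Rightarrow> ('y \<Rightarrow>\<^sub>L 'x)"
    and \<epsilon> c :: real
  assumes A0_lin: "clinear_op A0" and A1_lin: "clinear_op A1"
    and eps_pos: "\<epsilon> > 0"
    and R_inv: "\<forall>z. cmod z < 1 + \<epsilon> \<and> z \<noteq> 1 \<longrightarrow>
                  R z o\<^sub>L (A0 + cscaleL z A1) = id_blinfun \<and> (A0 + cscaleL z A1) o\<^sub>L R z = id_blinfun"
    and R_analytic: "op_analytic_on {z. cmod z < 1 + \<epsilon> \<and> z \<noteq> 1} R"
    and T_lin: "\<forall>j. clinear_op (T j)"
    and Laurent: "\<forall>z. 0 < cmod (z - 1) \<and> cmod (z - 1) < \<epsilon> \<longrightarrow>
                  ((\<lambda>j. cscaleL ((z - 1) powi j) (T j)) has_sum R z) UNIV"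
    and c_pos: "c > 0"
    and Q_bound: "\<forall>s. norm ((-1::real) ^ s *\<^sub>R (opow (op_inv A0 o\<^sub>L A1) s o\<^sub>L op_inv A0)
                     + (opow (op_inv (id_blinfun - (T (-1) o\<^sub>L (A0 + A1)))) (s + 1) o\<^sub>L T (-1)))
                   \<le> c / (1 + \<epsilon>) ^ s"
  shows "\<forall>l::nat.
     (let Q = (\<lambda>s. (-1::real) ^ s *\<^sub>R (opow (op_inv A0 o\<^sub>L A1) s o\<^sub>L op_inv A0)
                   + (opow (op_inv (id_blinfun - (T (-1) o\<^sub>L (A0 + A1)))) (s + 1) o\<^sub>L T (-1)))
      in summable (\<lambda>r. norm (real ((l + r) choose l) *\<^sub>R Q (l + r)))
         \<and> T (int l) = (\<Sum>r. real ((l + r) choose l) *\<^sub>R Q (l + r))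
         \<and> norm (T (int l)) \<le> c * (1 + \<epsilon>) / \<epsilon> ^ (l + 1))"
proof -
  interpret M: MT A0 A1 R T \<epsilon> c
    by (rule MT.intro[OF A0_lin A1_lin eps_pos R_inv R_analytic T_lin Laurent c_pos Q_bound])
  have Qeq: "(\<lambda>s. (-1::real) ^ s *\<^sub>R (opow (op_inv A0 o\<^sub>L A1) s o\<^sub>L op_inv A0)
                   + (opow (op_inv (id_blinfun - (T (-1) o\<^sub>L (A0 + A1)))) (s + 1) o\<^sub>L T (-1))) = M.Qc"
    by (rule ext) (simp add: M.Qc_def M.Kop_def)
  show ?thesis
  proof
    fix l :: nat
    define q where "q = 1 / (1 + \<epsilon>)"
    have q: "0 \<le> q" "q < 1" using eps_pos by (auto simp: q_def)
    define C where "C = c / (1 + \<epsilon>)^l"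
    have C: "C \<ge> 0" using c_pos eps_pos by (simp add: C_def)
    have bs: "(\<lambda>r. C * (real ((l + r) choose l) * q^r)) sums (C * (1 / (1 - q)^(l+1)))"
      by (rule sums_mult[OF binom_series[OF q]])
    have nb: "norm (real ((l + r) choose l) *\<^sub>R M.Qc (l + r)) \<le> C * (real ((l + r) choose l) * q^r)" for r
    proof -
      have "norm (real ((l + r) choose l) *\<^sub>R M.Qc (l + r)) = real ((l + r) choose l) * norm (M.Qc (l + r))"
        by simp
      also have "\<dots> \<le> real ((l + r) choose l) * (c / (1 + \<epsilon>) ^ (l + r))"
        by (intro mult_left_mono M.Qc_bound) auto
      also have "c / (1 + \<epsilon>) ^ (l + r) = C * q^r"
        by (simp add: C_def q_def power_add power_divide)
      finally show ?thesis by (simp add: algebra_simps)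
    qed
    have sn: "summable (\<lambda>r. norm (real ((l + r) choose l) *\<^sub>R M.Qc (l + r)))"
      by (rule summable_comparison_test'[OF sums_summable[OF bs], of 0]) (use nb in auto)
    have Teq: "T (int l) = (\<Sum>r. real ((l + r) choose l) *\<^sub>R M.Qc (l + r))" by (rule M.T_eq)
    have "norm (T (int l)) \<le> (\<Sum>r. norm (real ((l + r) choose l) *\<^sub>R M.Qc (l + r)))"
      unfolding Teq by (rule summable_norm[OF sn])
    also have "\<dots> \<le> (\<Sum>r. C * (real ((l + r) choose l) * q^r))"
      by (rule suminf_le[OF nb sn sums_summable[OF bs]])
    also have "\<dots> = C * (1 / (1 - q)^(l+1))" using bs by (simp add: sums_iff)
    also have "\<dots> = c * (1 + \<epsilon>) / \<epsilon> ^ (l + 1)"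
    proof -
      have e1: "1 - q = \<epsilon> / (1 + \<epsilon>)" using eps_pos by (simp add: q_def field_simps)
      have "C * (1 / (\<epsilon> / (1 + \<epsilon>))^(l+1)) = c * (1 + \<epsilon>) / \<epsilon> ^ (l + 1)"
        using eps_pos by (simp add: C_def power_divide field_simps)
      then show ?thesis unfolding e1 .
    qed
    finally have bound: "norm (T (int l)) \<le> c * (1 + \<epsilon>) / \<epsilon> ^ (l + 1)" .
    show "let Q = (\<lambda>s. (-1::real) ^ s *\<^sub>R (opow (op_inv A0 o\<^sub>L A1) s o\<^sub>L op_inv A0)
                   + (opow (op_inv (id_blinfun - (T (-1) o\<^sub>L (A0 + A1)))) (s + 1) o\<^sub>L T (-1)))
      in summable (\<lambda>r. norm (real ((l + r) choose l) *\<^sub>R Q (l + r)))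
         \<and> T (int l) = (\<Sum>r. real ((l + r) choose l) *\<^sub>R Q (l + r))
         \<and> norm (T (int l)) \<le> c * (1 + \<epsilon>) / \<epsilon> ^ (l + 1)"
      unfolding Let_def Qeq using sn Teq bound by blast
  qed
qed



end
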